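(* Let $W\in\mathbb{R}^{n\times n}$ satisfy $W\mathbf{1}=W^\top\mathbf{1}=\mathbf{1}$. Then the following are equivalent: (i) $W$ is eventually doubly stochastic (EDS); (ii) $W$ is marginally Schur stable with the eigenvalue $1$ simple and strictly dominant. If moreover $W$ is normal ($WW^\top=W^\top W$), then (i) and (ii) are also equivalent to (iii) $I-W^\top W$ is positive semidefinite of corank $1$.
   Context: $W$ is a real matrix (entries of any sign). $W$ is eventually positive (EP) if there is $t_0\in\mathbb{Z}_{\ge0}$ with $W^t$ entrywise positive for all integers $t\ge t_0$; ES means EP and $W\mathbf{1}=\mathbf{1}$; EDS means ES and $W^\top\mathbf{1}=\mathbf{1}$. $W$ is marginally Schur stable if all eigenvalues satisfy $|\lambda|\le1$ and each eigenvalue with $|\lambda|=1$ is a simple root of the minimal polynomial. "The eigenvalue $1$ is simple and strictly dominant" means $1$ has algebraic multiplicity one and $|\lambda|<1$ for every other eigenvalue. Corank means dimension of the kernel. *)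

theory Defs
  imports "Jordan_Normal_Form.Jordan_Normal_Form" "Jordan_Normal_Form.Matrix_Kernel"
begin

definition ones_vec :: "nat \<Rightarrow> 'a :: {zero,one} vec" where
  "ones_vec n = vec n (\<lambda>_. 1)"

definition eventually_positive :: "nat \<Rightarrow> real mat \<Rightarrow> bool" where
  "eventually_positive n W \<longleftrightarrow>
     (\<exists>t0::nat. \<forall>t\<ge>t0. \<forall>i<n. \<forall>j<n. (W ^\<^sub>m t) $$ (i,j) > 0)"

definition eventually_stochastic :: "nat \<Rightarrow> real mat \<Rightarrow> bool" where
  "eventually_stochastic n W \<longleftrightarrow> eventually_positive n W \<and> W *\<^sub>v ones_vec n = ones_vec n"

definition eventually_doubly_stochastic :: "nat \<Rightarrow> real mat \<Rightarrow> bool" where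
  "eventually_doubly_stochastic n W \<longleftrightarrow>
     eventually_stochastic n W \<and> transpose_mat W *\<^sub>v ones_vec n = ones_vec n"

abbreviation cmat :: "real mat \<Rightarrow> complex mat" where
  "cmat W \<equiv> map_mat complex_of_real W"

definition poly_mat_eval :: "nat \<Rightarrow> 'a :: comm_ring_1 poly \<Rightarrow> 'a mat \<Rightarrow> 'a mat" where
  "poly_mat_eval n p A =
     fold (\<lambda>i M. M + coeff p i \<cdot>\<^sub>m (A ^\<^sub>m i)) [0..<Suc (degree p)] (0\<^sub>m n n)"

definition is_min_poly :: "nat \<Rightarrow> 'a :: field mat \<Rightarrow> 'a poly \<Rightarrow> bool" where
  "is_min_poly n A p \<longleftrightarrow> lead_coeff p = 1 \<and> poly_mat_eval n p A = 0\<^sub>m n n \<and>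
     (\<forall>q. q \<noteq> 0 \<and> poly_mat_eval n q A = 0\<^sub>m n n \<longrightarrow> degree p \<le> degree q)"

definition marginally_schur_stable :: "nat \<Rightarrow> real mat \<Rightarrow> bool" where
  "marginally_schur_stable n W \<longleftrightarrow>
     (\<forall>z. eigenvalue (cmat W) z \<longrightarrow> cmod z \<le> 1) \<and>
     (\<forall>z. eigenvalue (cmat W) z \<and> cmod z = 1 \<longrightarrow>
        (\<forall>p. is_min_poly n (cmat W) p \<longrightarrow> Polynomial.order z p = 1))"

definition one_simple_strictly_dominant :: "real mat \<Rightarrow> bool" where
  "one_simple_strictly_dominant W \<longleftrightarrow>
     Polynomial.order 1 (char_poly (cmat W)) = 1 \<and>
     (\<forall>z. eigenvalue (cmat W) z \<and> z \<noteq> 1 \<longrightarrow> cmod z < 1)"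

definition psd_mat :: "nat \<Rightarrow> real mat \<Rightarrow> bool" where
  "psd_mat n A \<longleftrightarrow> (\<forall>x \<in> carrier_vec n. x \<bullet> (A *\<^sub>v x) \<ge> 0)"

end

theory Submission
  imports Defs "Jordan_Normal_Form.Jordan_Normal_Form_Existence" "Jordan_Normal_Form.Jordan_Normal_Form_Uniqueness"
    "Jordan_Normal_Form.Spectral_Radius"
begin
context kernel
begin

lemma fin_dim_K: "Ker.fin_dim"
proof -
  from kernel_basis_exists[OF A] obtain B where "finite B" "Ker.basis B" by auto
  thus ?thesis unfolding Ker.fin_dim_def Ker.basis_def by auto
qed

lemma li_single: assumes v: "v \<in> mat_kernel A" and v0: "v \<noteq> 0\<^sub>v nc"
  shows "Ker.lin_indpt {v}"
proof (rule Ker.finite_lin_indpt2)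
  show "{v} \<subseteq> mat_kernel A" using v by auto
  fix a assume "a \<in> {v} \<rightarrow> UNIV" and lc: "lincomb a {v} = 0\<^sub>v nc"
  have vc: "v \<in> carrier_vec nc" using v mat_kernel[OF A] by auto
  from v0 vc obtain i where i: "i < nc" "v $ i \<noteq> 0" by (metis eq_vecI carrier_vecD index_zero_vec)
  have "lincomb a {v} $ i = a v * v $ i" using lincomb_index[OF i(1), of "{v}" a] v by auto
  with lc i show "\<forall>w\<in>{v}. a w = 0" by auto
qed auto

lemma li_two: assumes v: "v \<in> mat_kernel A" and w: "w \<in> mat_kernel A" and v0: "v \<noteq> 0\<^sub>v nc"
  and nw: "\<And>c. w \<noteq> c \<cdot>\<^sub>v v"
  shows "Ker.lin_indpt {v, w}"
proof (rule Ker.finite_lin_indpt2)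
  show "{v,w} \<subseteq> mat_kernel A" using v w by auto
  have vc: "v \<in> carrier_vec nc" using v mat_kernel[OF A] by auto
  have wc: "w \<in> carrier_vec nc" using w mat_kernel[OF A] by auto
  have vw: "v \<noteq> w" using nw[of 1] vc by auto
  fix a assume "a \<in> {v,w} \<rightarrow> UNIV" and lc: "lincomb a {v,w} = 0\<^sub>v nc"
  have ent: "a v * v $ i + a w * w $ i = 0" if i: "i < nc" for i
  proof -
    have "lincomb a {v,w} $ i = a v * v $ i + a w * w $ i"
      using lincomb_index[OF i, of "{v,w}" a] v w vw by auto
    with lc i show ?thesis by auto
  qed
  have aw: "a w = 0"
  proof (rule ccontr)
    assume aw: "a w \<noteq> 0"
    have "w = (- a v / a w) \<cdot>\<^sub>v v"
    proof (rule eq_vecI)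
      fix i assume "i < dim_vec ((- a v / a w) \<cdot>\<^sub>v v)"
      hence i: "i < nc" using vc by auto
      from ent[OF i] aw have "w $ i = - a v / a w * v $ i" by (simp add: field_simps) (metis add_eq_0_iff)
      thus "w $ i = ((- a v / a w) \<cdot>\<^sub>v v) $ i" using i vc by auto
    qed (use vc wc in auto)
    with nw show False by blast
  qed
  from v0 vc obtain i where i: "i < nc" "v $ i \<noteq> 0" by (metis eq_vecI carrier_vecD index_zero_vec)
  from ent[OF i(1)] aw i(2) have "a v = 0" by auto
  with aw show "\<forall>u\<in>{v,w}. a u = 0" by auto
qed auto

lemma dim_ge2: assumes "v \<in> mat_kernel A" "w \<in> mat_kernel A" "v \<noteq> 0\<^sub>v nc"
  "\<And>c. w \<noteq> c \<cdot>\<^sub>v v"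
  shows "dim \<ge> 2"
proof -
  have vc: "v \<in> carrier_vec nc" using assms(1) mat_kernel[OF A] by auto
  have vw: "v \<noteq> w" using assms(4)[of 1] vc by auto
  have "card {v,w} \<le> dim"
    by (rule Ker.li_le_dim(2)[OF fin_dim_K _ li_two[OF assms]], use assms in auto)
  thus ?thesis using vw by auto
qed

lemma dim_ge1: assumes "v \<in> mat_kernel A" "v \<noteq> 0\<^sub>v nc"
  shows "dim \<ge> 1"
proof -
  have "card {v} \<le> dim"
    by (rule Ker.li_le_dim(2)[OF fin_dim_K _ li_single[OF assms]], use assms in auto)
  thus ?thesis by auto
qed

lemma dim_le1: assumes v: "v \<in> mat_kernel A" and all: "\<And>w. w \<in> mat_kernel A \<Longrightarrow> \<exists>c. w = c \<cdot>\<^sub>v v"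
  shows "dim \<le> 1"
proof -
  have "span {v} \<subseteq> mat_kernel A" using Ker.span_is_subset2[of "{v}"] v by auto
  moreover have "mat_kernel A \<subseteq> span {v}"
  proof
    fix w assume "w \<in> mat_kernel A"
    then obtain c where wc: "w = c \<cdot>\<^sub>v v" using all by blast
    have "lincomb (\<lambda>_. c) {v} = c \<cdot>\<^sub>v v"
    proof -
      have vc: "v \<in> carrier_vec nc" using v mat_kernel[OF A] by auto
      show ?thesis
      proof (rule eq_vecI)
        fix i assume "i < dim_vec (c \<cdot>\<^sub>v v)"
        hence i: "i < nc" using vc by auto
        show "lincomb (\<lambda>_. c) {v} $ i = (c \<cdot>\<^sub>v v) $ i"
          using lincomb_index[OF i, of "{v}"] v i vc by auto
      next
        have "lincomb (\<lambda>_. c) {v} \<in> mat_kernel A" using v by (intro Ker.lincomb_closed) auto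
        thus "dim_vec (lincomb (\<lambda>_. c) {v}) = dim_vec (c \<cdot>\<^sub>v v)" using vc mat_kernel[OF A] by auto
      qed
    qed
    thus "w \<in> span {v}" unfolding Ker.span_def wc
      by (intro CollectI exI[of _ "\<lambda>_. c"] exI[of _ "{v}"]) (use v in auto)
  qed
  ultimately have "span {v} = mat_kernel A" by auto
  hence "dim \<le> card {v}" using Ker.gen_ge_dim[of "{v}"] v by auto
  thus ?thesis by auto
qed

end

lemma pow_mat_Suc_left: assumes A: "A \<in> carrier_mat n n"
  shows "A ^\<^sub>m (Suc k) = A * A ^\<^sub>m k"
proof (induct k)
  case 0 thus ?case using A by simp
next
  case (Suc k)
  have "A ^\<^sub>m Suc (Suc k) = (A * A ^\<^sub>m k) * A" using Suc by simp
  also have "\<dots> = A * (A ^\<^sub>m k * A)" using assoc_mult_mat[OF A pow_carrier_mat[OF A, of k] A] .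
  finally show ?case by simp
qed

lemma zero_smult_mat': "M \<in> carrier_mat nr nc \<Longrightarrow> (0::'a::semiring_0) \<cdot>\<^sub>m M = 0\<^sub>m nr nc"
  by (intro eq_matI) auto

lemma smult_smult_mat': "(a::'a::semigroup_mult) \<cdot>\<^sub>m (b \<cdot>\<^sub>m M) = (a * b) \<cdot>\<^sub>m M"
  by (intro eq_matI) (auto simp: mult.assoc)

lemma smult_mat_mult_vec': assumes "A \<in> carrier_mat nr nc" "v \<in> carrier_vec nc"
  shows "(k \<cdot>\<^sub>m A) *\<^sub>v v = (k::'a::comm_ring_1) \<cdot>\<^sub>v (A *\<^sub>v v)"
  using assms by (intro eq_vecI) (auto simp: scalar_prod_def sum_distrib_left mult.assoc)

definition FF :: "nat \<Rightarrow> 'a :: comm_ring_1 mat \<Rightarrow> 'a poly \<Rightarrow> nat \<Rightarrow> 'a mat" where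
  "FF n A p N = fold (\<lambda>i M. M + coeff p i \<cdot>\<^sub>m (A ^\<^sub>m i)) [0..<N] (0\<^sub>m n n)"

lemma FF_0[simp]: "FF n A p 0 = 0\<^sub>m n n" unfolding FF_def by simp

lemma FF_Suc: "FF n A p (Suc N) = FF n A p N + coeff p N \<cdot>\<^sub>m (A ^\<^sub>m N)"
  unfolding FF_def by simp

lemma FF_carrier[simp]: assumes A: "A \<in> carrier_mat n n" shows "FF n A p N \<in> carrier_mat n n"
  by (induct N, auto simp: FF_Suc A)

lemma FF_stable: assumes A: "A \<in> carrier_mat n n" and N: "degree p < N"
  shows "FF n A p N = poly_mat_eval n p A"
  using N
proof (induct N)
  case 0 thus ?case by simp
next
  case (Suc N)
  show ?case
  proof (cases "degree p < N")
    case True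
    have "coeff p N = 0" using True coeff_eq_0 by blast
    hence "FF n A p (Suc N) = FF n A p N" unfolding FF_Suc using A
      by (simp add: zero_smult_mat'[OF pow_carrier_mat[OF A]])
    with Suc True show ?thesis by simp
  next
    case False
    with Suc have "N = degree p" by auto
    thus ?thesis unfolding poly_mat_eval_def FF_def by simp
  qed
qed

lemma PE_FF: assumes A: "A \<in> carrier_mat n n" and N: "degree p < N"
  shows "poly_mat_eval n p A = FF n A p N" using FF_stable[OF A N] by simp

lemma PE_carrier[simp]: assumes A: "A \<in> carrier_mat n n" shows "poly_mat_eval n p A \<in> carrier_mat n n"
  using PE_FF[OF A, of p "Suc (degree p)"] FF_carrier[OF A] by simp

lemma FF_add: assumes A: "A \<in> carrier_mat n n"
  shows "FF n A (p + q) N = FF n A p N + FF n A q N"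
proof (induct N)
  case 0 thus ?case by simp
next
  case (Suc N)
  let ?P = "FF n A p N" let ?Q = "FF n A q N"
  let ?a = "coeff p N \<cdot>\<^sub>m (A ^\<^sub>m N)" let ?b = "coeff q N \<cdot>\<^sub>m (A ^\<^sub>m N)"
  have c: "?P \<in> carrier_mat n n" "?Q \<in> carrier_mat n n" "?a \<in> carrier_mat n n" "?b \<in> carrier_mat n n"
    using A by auto
  have "FF n A (p + q) (Suc N) = (?P + ?Q) + (?a + ?b)"
    unfolding FF_Suc Suc coeff_add using A by (simp add: add_smult_distrib_right_mat[OF pow_carrier_mat[OF A]])
  also have "\<dots> = (?P + ?a) + (?Q + ?b)" using c
    by (intro eq_matI) (auto simp: ac_simps)
  finally show ?case unfolding FF_Suc .
qed

lemma FF_smult: assumes A: "A \<in> carrier_mat n n"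
  shows "FF n A (Polynomial.smult a p) N = a \<cdot>\<^sub>m FF n A p N"
proof (induct N)
  case 0 thus ?case by (auto intro!: eq_matI)
next
  case (Suc N)
  show ?case unfolding FF_Suc Suc using A
    by (simp add: add_smult_distrib_left_mat[OF FF_carrier[OF A]] smult_smult_mat')
qed

lemma FF_pCons0: assumes A: "A \<in> carrier_mat n n"
  shows "FF n A (pCons 0 p) (Suc N) = A * FF n A p N"
proof (induct N)
  case 0 thus ?case using A by (simp add: FF_Suc right_mult_zero_mat zero_smult_mat'[OF one_carrier_mat])
next
  case (Suc N)
  have "FF n A (pCons 0 p) (Suc (Suc N)) = A * FF n A p N + coeff p N \<cdot>\<^sub>m (A * A ^\<^sub>m N)"
    unfolding FF_Suc[of _ _ _ "Suc N"] Suc pow_mat_Suc_left[OF A] by simp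
  also have "\<dots> = A * (FF n A p N + coeff p N \<cdot>\<^sub>m A ^\<^sub>m N)"
    using A by (simp add: mult_add_distrib_mat[OF A FF_carrier[OF A] smult_carrier_mat[OF pow_carrier_mat[OF A]]]
       mult_smult_distrib[OF A pow_carrier_mat[OF A]])
  finally show ?case unfolding FF_Suc .
qed

lemma PE_add: assumes A: "A \<in> carrier_mat n n"
  shows "poly_mat_eval n (p + q) A = poly_mat_eval n p A + poly_mat_eval n q A"
proof -
  define N where "N = Suc (degree p + degree q)"
  have "degree (p + q) < N" unfolding N_def using degree_add_le_max[of p q] by linarith
  thus ?thesis using PE_FF[OF A, of p N] PE_FF[OF A, of q N] PE_FF[OF A, of "p+q" N] FF_add[OF A]
    unfolding N_def by simp
qed

lemma PE_smult: assumes A: "A \<in> carrier_mat n n"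
  shows "poly_mat_eval n (Polynomial.smult a p) A = a \<cdot>\<^sub>m poly_mat_eval n p A"
proof -
  define N where "N = Suc (degree p)"
  have "degree (Polynomial.smult a p) < N" unfolding N_def using degree_smult_le[of a p] by linarith
  thus ?thesis using PE_FF[OF A, of p N] PE_FF[OF A, of "Polynomial.smult a p" N] FF_smult[OF A]
    unfolding N_def by simp
qed

lemma PE_pCons0: assumes A: "A \<in> carrier_mat n n"
  shows "poly_mat_eval n (pCons 0 p) A = A * poly_mat_eval n p A"
proof -
  define N where "N = Suc (degree p)"
  have "degree (pCons 0 p) < Suc N" unfolding N_def
    by (metis Suc_le_mono degree_pCons_le le_imp_less_Suc)
  thus ?thesis using PE_FF[OF A, of p N] PE_FF[OF A, of "pCons 0 p" "Suc N"] FF_pCons0[OF A]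
    unfolding N_def by simp
qed

lemma PE_const: assumes A: "A \<in> carrier_mat n n"
  shows "poly_mat_eval n [:a:] A = a \<cdot>\<^sub>m 1\<^sub>m n"
  unfolding poly_mat_eval_def using A by simp

lemma PE_pCons: assumes A: "A \<in> carrier_mat n n"
  shows "poly_mat_eval n (pCons a p) A = a \<cdot>\<^sub>m 1\<^sub>m n + A * poly_mat_eval n p A"
proof -
  have "pCons a p = [:a:] + pCons 0 p" by simp
  thus ?thesis using PE_add[OF A, of "[:a:]" "pCons 0 p"] PE_const[OF A] PE_pCons0[OF A] by simp
qed

lemma PE_zero: assumes A: "A \<in> carrier_mat n n"
  shows "poly_mat_eval n 0 A = 0\<^sub>m n n"
  using PE_const[OF A, of 0] by (simp add: zero_smult_mat'[OF one_carrier_mat])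

lemma PE_mult: assumes A: "A \<in> carrier_mat n n"
  shows "poly_mat_eval n (p * q) A = poly_mat_eval n p A * poly_mat_eval n q A"
proof (induct p)
  case 0 thus ?case using A by (simp add: PE_zero left_mult_zero_mat[OF PE_carrier[OF A]])
next
  case (pCons a p)
  let ?E = "\<lambda>p. poly_mat_eval n p A"
  have c: "?E p \<in> carrier_mat n n" "?E q \<in> carrier_mat n n" using A by auto
  have "pCons a p * q = Polynomial.smult a q + pCons 0 (p * q)" by simp
  hence "?E (pCons a p * q) = a \<cdot>\<^sub>m ?E q + A * (?E p * ?E q)"
    using PE_add[OF A] PE_smult[OF A] PE_pCons0[OF A] pCons(2) by simp
  also have "\<dots> = (a \<cdot>\<^sub>m 1\<^sub>m n + A * ?E p) * ?E q"
    using A c by (simp add: add_mult_distrib_mat[OF smult_carrier_mat[OF one_carrier_mat] mult_carrier_mat[OF A c(1)] c(2)]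
      mult_smult_assoc_mat[OF one_carrier_mat c(2)] assoc_mult_mat[OF A c(1) c(2)] left_mult_one_mat[OF c(2)])
  finally show ?case using PE_pCons[OF A] by simp
qed

lemma PE_pCons_vec: assumes A: "A \<in> carrier_mat n n" and v: "v \<in> carrier_vec n"
  shows "poly_mat_eval n (pCons a p) A *\<^sub>v v = a \<cdot>\<^sub>v v + A *\<^sub>v (poly_mat_eval n p A *\<^sub>v v)"
proof -
  let ?E = "poly_mat_eval n p A"
  have c: "?E \<in> carrier_mat n n" using A by auto
  show ?thesis
    unfolding PE_pCons[OF A] using A c v
    by (simp add: add_mult_distrib_mat_vec[OF smult_carrier_mat[OF one_carrier_mat] mult_carrier_mat[OF A c] v]
      smult_mat_mult_vec'[OF one_carrier_mat v] assoc_mult_mat_vec[OF A c v])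
qed

lemma PE_mult_vec: assumes A: "A \<in> carrier_mat n n" and v: "v \<in> carrier_vec n"
  shows "poly_mat_eval n (p * q) A *\<^sub>v v = poly_mat_eval n p A *\<^sub>v (poly_mat_eval n q A *\<^sub>v v)"
  unfolding PE_mult[OF A] using A v by (simp add: assoc_mult_mat_vec[OF PE_carrier[OF A] PE_carrier[OF A] v])

lemma PE_zero_vec: assumes A: "A \<in> carrier_mat n n" and v: "v \<in> carrier_vec n"
  shows "poly_mat_eval n 0 A *\<^sub>v v = 0\<^sub>v n"
  unfolding PE_zero[OF A] using v by auto

lemma PE_lin_vec: assumes A: "A \<in> carrier_mat n n" and v: "v \<in> carrier_vec n"
  shows "poly_mat_eval n [:-1,1:] A *\<^sub>v v = A *\<^sub>v v - (v :: 'a :: comm_ring_1 vec)"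
proof -
  have z: "A *\<^sub>v 0\<^sub>v n = 0\<^sub>v n" using A by (intro eq_vecI) (auto simp: scalar_prod_def)
  have "poly_mat_eval n [:-1,1:] A *\<^sub>v v = (-1) \<cdot>\<^sub>v v + A *\<^sub>v (1 \<cdot>\<^sub>v v + A *\<^sub>v 0\<^sub>v n)"
    using PE_pCons_vec[OF A v, of "-1" "[:1:]"] PE_pCons_vec[OF A v, of 1 0] PE_zero_vec[OF A v] by simp
  also have "\<dots> = A *\<^sub>v v - v" unfolding z using A v by (intro eq_vecI) auto
  finally show ?thesis .
qed

lemma PE_eigen: assumes A: "A \<in> carrier_mat n n" and v: "v \<in> carrier_vec n"
  and Av: "A *\<^sub>v v = (k :: 'a :: field) \<cdot>\<^sub>v v"
  shows "poly_mat_eval n p A *\<^sub>v v = poly p k \<cdot>\<^sub>v v"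
proof (induct p)
  case 0 thus ?case using A v by (auto simp: PE_zero intro!: eq_vecI)
next
  case (pCons a p)
  let ?E = "poly_mat_eval n p A"
  have c: "?E \<in> carrier_mat n n" using A by auto
  have "poly_mat_eval n (pCons a p) A *\<^sub>v v = a \<cdot>\<^sub>v v + A *\<^sub>v (?E *\<^sub>v v)"
    unfolding PE_pCons[OF A] using A c v
    by (simp add: add_mult_distrib_mat_vec[OF smult_carrier_mat[OF one_carrier_mat] mult_carrier_mat[OF A c] v]
      smult_mat_mult_vec'[OF one_carrier_mat v] assoc_mult_mat_vec[OF A c v])
  also have "\<dots> = (a + k * poly p k) \<cdot>\<^sub>v v" unfolding pCons(2) using A v Av
    by (simp add: mult_mat_vec add_smult_distrib_vec smult_smult_assoc mult.commute)
  finally show ?case by simp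
qed

lemma mv_index: assumes "A \<in> carrier_mat nr nc" "v \<in> carrier_vec nc" "i < nr"
  shows "(A *\<^sub>v v) $ i = (\<Sum>j<nc. A $$ (i,j) * v $ j)"
  using assms by (auto simp: scalar_prod_def lessThan_atLeast0 intro!: sum.cong)

lemma ones_vec_carrier[simp]: "ones_vec n \<in> carrier_vec n" unfolding ones_vec_def by auto
lemma ones_vec_index[simp]: "i < n \<Longrightarrow> ones_vec n $ i = 1" unfolding ones_vec_def by auto
lemma ones_vec_dim[simp]: "dim_vec (ones_vec n) = n" unfolding ones_vec_def by auto

lemma minus_vec_eq0: assumes "x \<in> carrier_vec n" "y \<in> carrier_vec n" "x - y = 0\<^sub>v n"
  shows "x = (y :: 'a :: ab_group_add vec)"
proof (rule eq_vecI)
  fix i assume "i < dim_vec y"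
  hence i: "i < n" using assms by auto
  have a: "(x - y) $ i = 0" using assms(3) i by simp
  have b: "(x - y) $ i = x $ i - y $ i" using assms(1,2) i by simp
  from a b show "x $ i = y $ i" by simp
qed (use assms in auto)

lemma mult_zero_vec': "A \<in> carrier_mat nr nc \<Longrightarrow> A *\<^sub>v 0\<^sub>v nc = (0\<^sub>v nr :: 'a :: semiring_0 vec)"
  by (intro eq_vecI) (auto simp: scalar_prod_def)

lemma zero_mult_vec': "v \<in> carrier_vec nc \<Longrightarrow> 0\<^sub>m nr nc *\<^sub>v v = (0\<^sub>v nr :: 'a :: semiring_0 vec)"
  by (intro eq_vecI) (auto simp: scalar_prod_def)

lemma vec_minus_self: "v - v = (0\<^sub>v (dim_vec v) :: 'a :: ab_group_add vec)"
  by (intro eq_vecI) auto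

locale ds =
  fixes n :: nat and W :: "real mat"
  assumes n: "0 < n" and Wc: "W \<in> carrier_mat n n"
    and rs: "W *\<^sub>v ones_vec n = ones_vec n"
    and cs: "transpose_mat W *\<^sub>v ones_vec n = ones_vec n"
begin

abbreviation "CW \<equiv> cmat W"
abbreviation "onec \<equiv> (ones_vec n :: complex vec)"

lemma CWc: "CW \<in> carrier_mat n n" using Wc by auto

lemma rsum: "i < n \<Longrightarrow> (\<Sum>j<n. W $$ (i,j)) = 1"
  using arg_cong[OF rs, of "\<lambda>v. v $ i"] mv_index[OF Wc ones_vec_carrier, of i] by simp

lemma csum: "j < n \<Longrightarrow> (\<Sum>i<n. W $$ (i,j)) = 1"
  using arg_cong[OF cs, of "\<lambda>v. v $ j"] mv_index[OF transpose_carrier_mat[THEN iffD2, OF Wc] ones_vec_carrier, of j] Wc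
  by simp

lemma A_index: "i < n \<Longrightarrow> j < n \<Longrightarrow> CW $$ (i,j) = complex_of_real (W $$ (i,j))" using Wc by auto

lemma A_one: "CW *\<^sub>v onec = onec"
proof (rule eq_vecI)
  fix i assume "i < dim_vec onec" hence i: "i < n" by simp
  have "(CW *\<^sub>v onec) $ i = (\<Sum>j<n. complex_of_real (W $$ (i,j)))"
    using mv_index[OF CWc ones_vec_carrier i] A_index i by simp
  also have "\<dots> = complex_of_real (\<Sum>j<n. W $$ (i,j))" by simp
  finally show "(CW *\<^sub>v onec) $ i = onec $ i" using rsum[OF i] i by simp
qed (use CWc in auto)

lemma A_sum: assumes v: "v \<in> carrier_vec n"
  shows "(\<Sum>i<n. (CW *\<^sub>v v) $ i) = (\<Sum>i<n. v $ i)"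
proof -
  have "(\<Sum>i<n. (CW *\<^sub>v v) $ i) = (\<Sum>i<n. \<Sum>j<n. complex_of_real (W $$ (i,j)) * v $ j)"
    using mv_index[OF CWc v] A_index by simp
  also have "\<dots> = (\<Sum>j<n. \<Sum>i<n. complex_of_real (W $$ (i,j)) * v $ j)" by (rule sum.swap)
  also have "\<dots> = (\<Sum>j<n. complex_of_real (\<Sum>i<n. W $$ (i,j)) * v $ j)"
    by (simp add: sum_distrib_right)
  also have "\<dots> = (\<Sum>j<n. v $ j)" using csum by simp
  finally show ?thesis .
qed

definition Rz :: bool where
  "Rz \<longleftrightarrow> (\<forall>z v. v \<in> carrier_vec n \<longrightarrow> v \<noteq> 0\<^sub>v n \<longrightarrow> CW *\<^sub>v v = z \<cdot>\<^sub>v v \<longrightarrow> (\<Sum>i<n. v $ i) = 0 \<longrightarrow> cmod z < 1)"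

lemma sum_smult: "(v :: complex vec) \<in> carrier_vec n \<Longrightarrow> (\<Sum>i<n. (c \<cdot>\<^sub>v v) $ i) = c * (\<Sum>i<n. v $ i)"
  unfolding sum_distrib_left by simp

lemma ev_sum_zero: assumes v: "v \<in> carrier_vec n" and Av: "CW *\<^sub>v v = z \<cdot>\<^sub>v v" and z: "z \<noteq> 1"
  shows "(\<Sum>i<n. v $ i) = 0"
proof -
  have "z * (\<Sum>i<n. v $ i) = (\<Sum>i<n. v $ i)" using A_sum[OF v] Av sum_smult[OF v] by simp
  hence "(z - 1) * (\<Sum>i<n. v $ i) = 0" by (simp add: algebra_simps)
  with z show ?thesis by simp
qed

lemma KEY1: assumes R: Rz and u: "u \<in> carrier_vec n" and Au: "CW *\<^sub>v u = u"
  shows "\<exists>c. u = c \<cdot>\<^sub>v onec"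
proof -
  define c where "c = (\<Sum>i<n. u $ i) / of_nat n"
  define v where "v = u - c \<cdot>\<^sub>v onec"
  have vc: "v \<in> carrier_vec n" unfolding v_def using u by auto
  have Av: "CW *\<^sub>v v = 1 \<cdot>\<^sub>v v"
    unfolding v_def using u CWc A_one Au
    by (simp add: mult_minus_distrib_mat_vec mult_mat_vec)
  have "(\<Sum>i<n. v $ i) = (\<Sum>i<n. u $ i) - c * of_nat n"
    unfolding v_def using u by (simp add: sum_subtractf)
  also have "\<dots> = 0" unfolding c_def using n by simp
  finally have s: "(\<Sum>i<n. v $ i) = 0" .
  have "v = 0\<^sub>v n"
  proof (rule ccontr)
    assume "v \<noteq> 0\<^sub>v n"
    with R vc Av s have "cmod 1 < 1" unfolding Rz_def by blast
    thus False by simp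
  qed
  hence "u = c \<cdot>\<^sub>v onec" unfolding v_def using u
    by (intro eq_vecI) (auto dest!: arg_cong[of _ _ "\<lambda>x. x $ _"] simp: vec_eq_iff)
  thus ?thesis by blast
qed

lemma sum_onec: "(\<Sum>i<n. (c \<cdot>\<^sub>v onec) $ i) = c * of_nat n" by simp

lemma KEY2: assumes R: Rz and u: "u \<in> carrier_vec n"
  and Au: "CW *\<^sub>v (CW *\<^sub>v u - u) = CW *\<^sub>v u - u"
  shows "\<exists>c. u = c \<cdot>\<^sub>v onec"
proof -
  define w where "w = CW *\<^sub>v u - u"
  have wc: "w \<in> carrier_vec n" unfolding w_def using u CWc by auto
  from KEY1[OF R wc Au[folded w_def]] obtain c where wc1: "w = c \<cdot>\<^sub>v onec" by auto
  have "(\<Sum>i<n. w $ i) = 0" unfolding w_def using A_sum[OF u] u CWc by (simp add: sum_subtractf)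
  hence "c * of_nat n = 0" using wc1 by (auto simp: mult.commute)
  hence "c = 0 \<or> of_nat n = (0::complex)" by simp
  hence "c = 0" using n by auto
  hence "w = 0\<^sub>v n" using wc1 by auto
  hence "CW *\<^sub>v u - u = 0\<^sub>v n" unfolding w_def .
  hence "CW *\<^sub>v u = u" by (rule minus_vec_eq0[OF mult_mat_vec_carrier[OF CWc u] u])
  from KEY1[OF R u this] show ?thesis .
qed

definition Mch where "Mch = char_matrix CW 1"

lemma Mch_c: "Mch \<in> carrier_mat n n" unfolding Mch_def char_matrix_def using CWc by auto

lemma Mch_vec: "u \<in> carrier_vec n \<Longrightarrow> Mch *\<^sub>v u = CW *\<^sub>v u - u"
proof -
  assume u: "u \<in> carrier_vec n"
  have "Mch *\<^sub>v u = CW *\<^sub>v u + ((-1) \<cdot>\<^sub>m 1\<^sub>m n) *\<^sub>v u"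
    unfolding Mch_def char_matrix_def using CWc u
    by (simp add: add_mult_distrib_mat_vec[OF CWc smult_carrier_mat[OF one_carrier_mat] u])
  also have "\<dots> = CW *\<^sub>v u + (-1) \<cdot>\<^sub>v u" using smult_mat_mult_vec'[OF one_carrier_mat u] u by simp
  also have "\<dots> = CW *\<^sub>v u - u" using CWc u by (intro eq_vecI) auto
  finally show ?thesis .
qed

lemma Mch_pow2_vec: "u \<in> carrier_vec n \<Longrightarrow> (Mch ^\<^sub>m 2) *\<^sub>v u = Mch *\<^sub>v (Mch *\<^sub>v u)"
proof -
  assume u: "u \<in> carrier_vec n"
  have "Mch ^\<^sub>m 2 = Mch * Mch" using Mch_c by (simp add: numeral_2_eq_2)
  thus ?thesis using Mch_c u by simp
qed

lemma onec_ne0: "onec \<noteq> 0\<^sub>v n"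
proof
  assume "onec = 0\<^sub>v n"
  hence "onec $ 0 = 0\<^sub>v n $ 0" by simp
  thus False using n by simp
qed

lemma jnf_CW: "\<exists>n_as. jordan_nf CW n_as"
proof -
  from char_poly_factorized[OF CWc] obtain as where "char_poly CW = (\<Prod>a\<leftarrow>as. [:- a, 1:])" by auto
  from jordan_nf_exists[OF CWc this] show ?thesis .
qed

lemma sum_list_min1: "sum_list (map (min (1::nat)) xs) \<le> sum_list xs"
  by (induct xs) auto
lemma sum_list_min2: "min 2 (sum_list xs) \<le> sum_list (map (min (2::nat)) xs)"
  by (induct xs) auto

lemma order_dims: obtains xs where "Polynomial.order 1 (char_poly CW) = sum_list xs"
  "\<And>k. kernel_dim (Mch ^\<^sub>m k) = sum_list (map (min k) xs)"
proof -
  from jnf_CW obtain n_as where jnf: "jordan_nf CW n_as" by auto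
  define xs where "xs = map fst (filter (\<lambda>na. snd na = 1) n_as)"
  have o: "Polynomial.order 1 (char_poly CW) = sum_list xs" unfolding xs_def jordan_nf_order[OF jnf] ..
  have kd: "kernel_dim (Mch ^\<^sub>m k) = sum_list (map (min k) xs)" for k
    using dim_gen_eigenspace[OF jnf, of 1 k] unfolding dim_gen_eigenspace_def Mch_def xs_def
    by (simp add: case_prod_unfold comp_def)
  show ?thesis by (rule that[OF o kd])
qed

lemma kdim: assumes "M \<in> carrier_mat n n" shows "kernel_dim M = kernel.dim n M"
proof -
  interpret K: kernel n n M by (unfold_locales, rule assms)
  show ?thesis by simp
qed

lemma order_one: assumes R: Rz shows "Polynomial.order 1 (char_poly CW) = 1"
proof -
  obtain xs where ord: "Polynomial.order 1 (char_poly CW) = sum_list xs"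
    and kd: "\<And>k. kernel_dim (Mch ^\<^sub>m k) = sum_list (map (min k) xs)" using order_dims by blast
  have M1: "Mch ^\<^sub>m 1 = Mch" using Mch_c by simp
  have M2c: "Mch ^\<^sub>m 2 \<in> carrier_mat n n" using Mch_c by simp
  interpret K1: kernel n n Mch by (unfold_locales, rule Mch_c)
  interpret K2: kernel n n "Mch ^\<^sub>m 2" by (unfold_locales, rule M2c)
  have one_ker: "onec \<in> mat_kernel Mch"
    by (rule mat_kernelI[OF Mch_c ones_vec_carrier]) (simp add: Mch_vec A_one)
  have "K1.dim \<ge> 1" by (rule K1.dim_ge1[OF one_ker onec_ne0])
  hence g1: "sum_list (map (min 1) xs) \<ge> 1" using kd[of 1] M1 kdim[OF Mch_c] by simp
  have one_ker2: "onec \<in> mat_kernel (Mch ^\<^sub>m 2)"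
    by (rule mat_kernelI[OF M2c ones_vec_carrier]) (simp add: Mch_pow2_vec Mch_vec A_one mult_zero_vec'[OF CWc] vec_minus_self)
  have "K2.dim \<le> 1"
  proof (rule K2.dim_le1[OF one_ker2])
    fix w assume w: "w \<in> mat_kernel (Mch ^\<^sub>m 2)"
    have wc: "w \<in> carrier_vec n" using mat_kernelD(1)[OF M2c w] .
    have "(Mch ^\<^sub>m 2) *\<^sub>v w = 0\<^sub>v n" using mat_kernelD(2)[OF M2c w] .
    hence "Mch *\<^sub>v (Mch *\<^sub>v w) = 0\<^sub>v n" using Mch_pow2_vec[OF wc] by simp
    hence "CW *\<^sub>v (CW *\<^sub>v w - w) - (CW *\<^sub>v w - w) = 0\<^sub>v n"
      using Mch_vec wc CWc by (simp add: Mch_vec)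
    moreover have c1: "CW *\<^sub>v w - w \<in> carrier_vec n" using wc CWc by simp
    ultimately have "CW *\<^sub>v (CW *\<^sub>v w - w) = CW *\<^sub>v w - w"
      by (intro minus_vec_eq0[OF mult_mat_vec_carrier[OF CWc c1] c1])
    from KEY2[OF R wc this] show "\<exists>c. w = c \<cdot>\<^sub>v onec" .
  qed
  hence g2: "sum_list (map (min 2) xs) \<le> 1" using kd[of 2] kdim[OF M2c] by simp
  from g1 sum_list_min1[of xs] have "sum_list xs \<ge> 1" by simp
  moreover from g2 sum_list_min2[of xs] have "sum_list xs \<le> 1" by simp
  ultimately show ?thesis using ord by simp
qed

lemma eig_lt: assumes R: Rz and ev: "eigenvalue CW z" and z: "z \<noteq> 1"
  shows "cmod z < 1"
proof -
  from ev obtain v where "eigenvector CW v z" unfolding eigenvalue_def by auto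
  hence v: "v \<in> carrier_vec n" "v \<noteq> 0\<^sub>v n" "CW *\<^sub>v v = z \<cdot>\<^sub>v v" unfolding eigenvector_def using CWc by auto
  from ev_sum_zero[OF v(1) v(3) z] R v show ?thesis unfolding Rz_def by blast
qed

lemma Rz_osd: assumes R: Rz shows "one_simple_strictly_dominant W"
  unfolding one_simple_strictly_dominant_def using order_one[OF R] eig_lt[OF R] by blast

lemma osd_Rz: assumes osd: "one_simple_strictly_dominant W" shows Rz
  unfolding Rz_def
proof (intro allI impI)
  fix z v assume v: "v \<in> carrier_vec n" and v0: "v \<noteq> 0\<^sub>v n" and Av: "CW *\<^sub>v v = z \<cdot>\<^sub>v v"
    and s: "(\<Sum>i<n. v $ i) = 0"
  show "cmod z < 1"
  proof (cases "z = 1")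
    case False
    have "eigenvalue CW z" unfolding eigenvalue_def eigenvector_def using v v0 Av CWc by auto
    with False osd show ?thesis unfolding one_simple_strictly_dominant_def by auto
  next
    case True
    obtain xs where ord: "Polynomial.order 1 (char_poly CW) = sum_list xs"
      and kd: "\<And>k. kernel_dim (Mch ^\<^sub>m k) = sum_list (map (min k) xs)" using order_dims by blast
    interpret K1: kernel n n Mch by (unfold_locales, rule Mch_c)
    have one_ker: "onec \<in> mat_kernel Mch"
      by (rule mat_kernelI[OF Mch_c ones_vec_carrier]) (simp add: Mch_vec A_one)
    have v_ker: "v \<in> mat_kernel Mch"
      by (rule mat_kernelI[OF Mch_c v]) (use Av True v in \<open>simp add: Mch_vec\<close>)
    have nm: "v \<noteq> c \<cdot>\<^sub>v onec" for c
    proof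
      assume vc: "v = c \<cdot>\<^sub>v onec"
      hence "c * of_nat n = 0" using s by (auto simp: mult.commute)
      hence "c = 0 \<or> of_nat n = (0::complex)" by simp
      hence "c = 0" using n by auto
      with vc v0 show False by auto
    qed
    have "K1.dim \<ge> 2" by (rule K1.dim_ge2[OF one_ker v_ker onec_ne0 nm])
    hence "sum_list (map (min 1) xs) \<ge> 2" using kd[of 1] kdim[OF Mch_c] Mch_c by simp
    with sum_list_min1[of xs] ord osd show ?thesis unfolding one_simple_strictly_dominant_def by simp
  qed
qed

lemma mat_zero_by_vec: assumes M: "(M :: 'a :: comm_ring_1 mat) \<in> carrier_mat n n"
  and z: "\<And>x. x \<in> carrier_vec n \<Longrightarrow> M *\<^sub>v x = 0\<^sub>v n"
  shows "M = 0\<^sub>m n n"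
proof (rule eq_matI)
  fix i j assume "i < dim_row (0\<^sub>m n n :: 'a mat)" "j < dim_col (0\<^sub>m n n :: 'a mat)"
  hence ij: "i < n" "j < n" by auto
  have "(M *\<^sub>v unit_vec n j) $ i = (\<Sum>k<n. M $$ (i,k) * unit_vec n j $ k)"
    using mv_index[OF M _ ij(1), of "unit_vec n j"] by simp
  also have "\<dots> = (\<Sum>k<n. if k = j then M $$ (i,k) else 0)"
    by (intro sum.cong) (auto simp: unit_vec_def ij)
  also have "\<dots> = M $$ (i,j)" using ij by simp
  finally show "M $$ (i,j) = 0\<^sub>m n n $$ (i,j)" using z[of "unit_vec n j"] ij by simp
qed (use M in auto)

lemma minpoly_order: assumes R: Rz and mp: "is_min_poly n CW p"
  shows "Polynomial.order 1 p = 1"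
proof -
  from mp have lc: "lead_coeff p = 1" and pe: "poly_mat_eval n p CW = 0\<^sub>m n n"
    and mn: "\<And>q. q \<noteq> 0 \<Longrightarrow> poly_mat_eval n q CW = 0\<^sub>m n n \<Longrightarrow> degree p \<le> degree q"
    unfolding is_min_poly_def by auto
  have p0: "p \<noteq> 0" using lc by auto
  have "poly_mat_eval n p CW *\<^sub>v onec = poly p 1 \<cdot>\<^sub>v onec"
    by (rule PE_eigen[OF CWc ones_vec_carrier]) (simp add: A_one)
  hence "poly p 1 \<cdot>\<^sub>v onec = 0\<^sub>v n" using pe by (simp add: zero_mult_vec')
  hence "(poly p 1 \<cdot>\<^sub>v onec) $ 0 = 0" using n by simp
  hence "poly p 1 = 0" using n by simp
  hence o1: "Polynomial.order 1 p \<noteq> 0" using p0 order_root by blast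
  have "\<not> Polynomial.order 1 p \<ge> 2"
  proof
    assume "Polynomial.order 1 p \<ge> 2"
    hence "[:-1,1:] ^ 2 dvd p"
      by (meson le_imp_power_dvd order_1 dvd_trans)
    then obtain q where pq: "p = [:-1,1:] ^ 2 * q" by (auto elim: dvdE)
    have q0: "q \<noteq> 0" using pq p0 by auto
    define s where "s = [:-1,1:] * q"
    have s0: "s \<noteq> 0" unfolding s_def by (rule no_zero_divisors) (simp_all add: q0)
    have ds: "degree s = 1 + degree q" unfolding s_def by (subst degree_mult_eq) (simp_all add: q0)
    have "degree ([:-1,1:] ^ 2 * q) = degree ([:-1,1:] ^ 2 :: complex poly) + degree q"
      by (rule degree_mult_eq) (simp_all add: q0)
    hence dp: "degree p = 2 + degree q" unfolding pq by (simp only: degree_linear_power)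
    have "poly_mat_eval n s CW = 0\<^sub>m n n"
    proof (rule mat_zero_by_vec[OF PE_carrier[OF CWc]])
      fix x :: "complex vec" assume x: "x \<in> carrier_vec n"
      define y where "y = poly_mat_eval n q CW *\<^sub>v x"
      have y: "y \<in> carrier_vec n" unfolding y_def by (rule mult_mat_vec_carrier[OF PE_carrier[OF CWc] x])
      let ?T = "\<lambda>u. CW *\<^sub>v u - u"
      have "0\<^sub>v n = poly_mat_eval n p CW *\<^sub>v x" unfolding pe by (rule zero_mult_vec'[OF x, symmetric])
      also have "\<dots> = poly_mat_eval n ([:-1,1:] * [:-1,1:]) CW *\<^sub>v y"
        unfolding pq power2_eq_square y_def by (rule PE_mult_vec[OF CWc x])
      also have "\<dots> = poly_mat_eval n [:-1,1:] CW *\<^sub>v (poly_mat_eval n [:-1,1:] CW *\<^sub>v y)"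
        by (rule PE_mult_vec[OF CWc y])
      also have "\<dots> = ?T (?T y)"
        unfolding PE_lin_vec[OF CWc y] using y CWc by (subst PE_lin_vec[OF CWc]) auto
      finally have "?T (?T y) = 0\<^sub>v n" by simp
      moreover have c1: "?T y \<in> carrier_vec n" using y CWc by simp
      ultimately have "CW *\<^sub>v ?T y = ?T y" by (intro minus_vec_eq0[OF mult_mat_vec_carrier[OF CWc c1] c1])
      from KEY2[OF R y this] obtain c where "y = c \<cdot>\<^sub>v onec" by auto
      hence "?T y = 0\<^sub>v n" using CWc by (simp add: mult_mat_vec A_one)
      moreover have "poly_mat_eval n s CW *\<^sub>v x = ?T y"
        unfolding s_def y_def PE_mult_vec[OF CWc x] by (rule PE_lin_vec[OF CWc y[unfolded y_def]])
      ultimately show "poly_mat_eval n s CW *\<^sub>v x = 0\<^sub>v n" by simp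
    qed
    from mn[OF s0 this] ds dp show False by simp
  qed
  with o1 show ?thesis by simp
qed

lemma Rz_mss: assumes R: Rz shows "marginally_schur_stable n W"
  unfolding marginally_schur_stable_def
proof (intro conjI allI impI)
  fix z assume "eigenvalue CW z"
  thus "cmod z \<le> 1" using eig_lt[OF R] by (cases "z = 1") force+
next
  fix z p assume "eigenvalue CW z \<and> cmod z = 1" and "is_min_poly n CW p"
  thus "Polynomial.order z p = 1" using eig_lt[OF R, of z] minpoly_order[OF R] by (cases "z = 1") auto
qed

end

lemma mm_index: assumes "A \<in> carrier_mat n n" "B \<in> carrier_mat n n" "i < n" "j < n"
  shows "(A * B) $$ (i,j) = (\<Sum>k<n. A $$ (i,k) * B $$ (k,j))"
  using assms by (auto simp: scalar_prod_def lessThan_atLeast0 intro!: sum.cong)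

lemma one_smult_mat': "(1::'a::monoid_mult) \<cdot>\<^sub>m M = M"
  by (intro eq_matI) auto

lemma smult_pow_mat: assumes A: "A \<in> carrier_mat n n"
  shows "(a \<cdot>\<^sub>m A) ^\<^sub>m k = (a ^ k :: 'a :: comm_ring_1) \<cdot>\<^sub>m (A ^\<^sub>m k)"
proof (induct k)
  case 0 show ?case using A by (simp add: one_smult_mat')
next
  case (Suc k)
  have "(a \<cdot>\<^sub>m A) ^\<^sub>m Suc k = (a ^ k \<cdot>\<^sub>m A ^\<^sub>m k) * (a \<cdot>\<^sub>m A)" using Suc by simp
  also have "\<dots> = a ^ k \<cdot>\<^sub>m (A ^\<^sub>m k * (a \<cdot>\<^sub>m A))"
    by (rule mult_smult_assoc_mat[OF pow_carrier_mat[OF A] smult_carrier_mat[OF A]])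
  also have "A ^\<^sub>m k * (a \<cdot>\<^sub>m A) = a \<cdot>\<^sub>m (A ^\<^sub>m k * A)"
    by (rule mult_smult_distrib[OF pow_carrier_mat[OF A] A])
  finally show ?case by (simp add: smult_smult_mat' mult.commute)
qed

context ds
begin

definition Jr :: "real mat" where "Jr = mat n n (\<lambda>_. 1 / real n)"
definition Bm :: "real mat" where "Bm = W - Jr"

lemma Bm_c: "Bm \<in> carrier_mat n n" unfolding Bm_def Jr_def using Wc by auto

lemma Bm_index: "i < n \<Longrightarrow> j < n \<Longrightarrow> Bm $$ (i,j) = W $$ (i,j) - 1 / real n"
  unfolding Bm_def Jr_def using Wc by auto

lemma Wpow_c: "W ^\<^sub>m t \<in> carrier_mat n n" using Wc by simp

lemma Wpow_rsum: "i < n \<Longrightarrow> (\<Sum>j<n. (W ^\<^sub>m t) $$ (i,j)) = 1"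
proof (induct t arbitrary: i)
  case 0
  have "(\<Sum>j<n. (W ^\<^sub>m 0) $$ (i,j)) = (\<Sum>j<n. if j = i then 1 else 0)"
    using 0 Wc by (intro sum.cong) auto
  thus ?case using 0 by simp
next
  case (Suc t)
  have "(\<Sum>j<n. (W ^\<^sub>m Suc t) $$ (i,j)) = (\<Sum>j<n. \<Sum>k<n. (W ^\<^sub>m t) $$ (i,k) * W $$ (k,j))"
    using mm_index[OF Wpow_c Wc Suc(2)] by simp
  also have "\<dots> = (\<Sum>k<n. (W ^\<^sub>m t) $$ (i,k) * (\<Sum>j<n. W $$ (k,j)))"
    by (subst sum.swap) (simp add: sum_distrib_left)
  also have "\<dots> = (\<Sum>k<n. (W ^\<^sub>m t) $$ (i,k))" using rsum by simp
  finally show ?case using Suc by simp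
qed

lemma Bpow: assumes t: "t \<ge> 1" shows "i < n \<Longrightarrow> j < n \<Longrightarrow> (Bm ^\<^sub>m t) $$ (i,j) = (W ^\<^sub>m t) $$ (i,j) - 1 / real n"
  using t
proof (induct t arbitrary: i j rule: dec_induct)
  case base
  thus ?case using Bm_index Bm_c Wc by simp
next
  case (step t)
  have "(Bm ^\<^sub>m Suc t) $$ (i,j) = (\<Sum>k<n. (Bm ^\<^sub>m t) $$ (i,k) * Bm $$ (k,j))"
    using mm_index[OF pow_carrier_mat[OF Bm_c] Bm_c step(4,5)] by simp
  also have "\<dots> = (\<Sum>k<n. ((W ^\<^sub>m t) $$ (i,k) - 1 / real n) * (W $$ (k,j) - 1 / real n))"
    using step Bm_index by (intro sum.cong) auto
  also have "\<dots> = (\<Sum>k<n. (W ^\<^sub>m t) $$ (i,k) * W $$ (k,j)) - (1 / real n) * (\<Sum>k<n. (W ^\<^sub>m t) $$ (i,k))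
     - (1 / real n) * (\<Sum>k<n. W $$ (k,j)) + real n * (1 / real n) * (1 / real n)"
    by (simp add: algebra_simps sum_subtractf sum.distrib sum_distrib_left)
  also have "\<dots> = (W ^\<^sub>m Suc t) $$ (i,j) - 1 / real n"
    using mm_index[OF Wpow_c Wc step(4,5)] Wpow_rsum[OF step(4)] csum[OF step(5)] n by simp
  finally show ?case .
qed

abbreviation "CB \<equiv> cmat Bm"

lemma CBc: "CB \<in> carrier_mat n n" using Bm_c by auto

lemma CB_index: "i < n \<Longrightarrow> j < n \<Longrightarrow> CB $$ (i,j) = complex_of_real (W $$ (i,j)) - 1 / of_nat n"
proof -
  assume ij: "i < n" "j < n"
  have "CB $$ (i,j) = complex_of_real (Bm $$ (i,j))" using ij Bm_c by auto
  also have "\<dots> = complex_of_real (W $$ (i,j)) - 1 / of_nat n" using Bm_index[OF ij]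
    by (simp add: of_real_diff)
  finally show ?thesis .
qed

lemma CB_vec: assumes v: "v \<in> carrier_vec n"
  shows "CB *\<^sub>v v = CW *\<^sub>v v - ((\<Sum>i<n. v $ i) / of_nat n) \<cdot>\<^sub>v onec"
proof (rule eq_vecI)
  fix i assume "i < dim_vec (CW *\<^sub>v v - ((\<Sum>i<n. v $ i) / of_nat n) \<cdot>\<^sub>v onec)"
  hence i: "i < n" using CWc by simp
  have "(CB *\<^sub>v v) $ i = (\<Sum>j<n. CB $$ (i,j) * v $ j)" by (rule mv_index[OF CBc v i])
  also have "\<dots> = (\<Sum>j<n. (complex_of_real (W $$ (i,j)) - 1 / of_nat n) * v $ j)"
    by (intro sum.cong) (auto simp: CB_index i)
  also have "\<dots> = (\<Sum>j<n. complex_of_real (W $$ (i,j)) * v $ j) - (\<Sum>j<n. v $ j) / of_nat n"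
    by (simp add: algebra_simps sum_subtractf sum_divide_distrib)
  also have "\<dots> = (CW *\<^sub>v v - ((\<Sum>i<n. v $ i) / of_nat n) \<cdot>\<^sub>v onec) $ i"
    using mv_index[OF CWc v i] A_index i v CWc by simp
  finally show "(CB *\<^sub>v v) $ i = (CW *\<^sub>v v - ((\<Sum>i<n. v $ i) / of_nat n) \<cdot>\<^sub>v onec) $ i" .
qed (use CBc CWc in auto)

lemma CB_eig: assumes R: Rz and ev: "eigenvalue CB z" shows "cmod z < 1"
proof -
  from ev obtain v where "eigenvector CB v z" unfolding eigenvalue_def by auto
  hence v: "v \<in> carrier_vec n" "v \<noteq> 0\<^sub>v n" "CB *\<^sub>v v = z \<cdot>\<^sub>v v" unfolding eigenvector_def using CBc by auto
  show ?thesis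
  proof (cases "z = 0")
    case False
    have "(\<Sum>i<n. (CB *\<^sub>v v) $ i) = (\<Sum>i<n. (CW *\<^sub>v v) $ i) - (\<Sum>i<n. v $ i)"
      unfolding CB_vec[OF v(1)] using v(1) CWc n by (simp add: sum_subtractf)
    hence "z * (\<Sum>i<n. v $ i) = 0" using A_sum[OF v(1)] v(3) sum_smult[OF v(1)] by simp
    hence s: "(\<Sum>i<n. v $ i) = 0" using False by simp
    have "CB *\<^sub>v v = CW *\<^sub>v v" unfolding CB_vec[OF v(1)] s using v(1) CWc by (intro eq_vecI) auto
    hence "CW *\<^sub>v v = z \<cdot>\<^sub>v v" using v(3) by simp
    with R v(1,2) s show ?thesis unfolding Rz_def by blast
  qed simp
qed

lemma jnf_exists_c: "(X :: complex mat) \<in> carrier_mat n n \<Longrightarrow> \<exists>n_as. jordan_nf X n_as"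
proof -
  assume X: "X \<in> carrier_mat n n"
  from char_poly_factorized[OF X] obtain as where "char_poly X = (\<Prod>a\<leftarrow>as. [:- a, 1:])" by auto
  from jordan_nf_exists[OF X this] show ?thesis .
qed

lemma decay: assumes R: Rz
  shows "\<exists>c r. 0 \<le> c \<and> 0 < r \<and> r < 1 \<and> (\<forall>k i j. i < n \<longrightarrow> j < n \<longrightarrow> \<bar>(Bm ^\<^sub>m k) $$ (i,j)\<bar> \<le> c * r ^ k)"
proof -
  define sr where "sr = spectral_radius CB"
  from spectral_radius_mem_max(1)[OF CBc n] obtain z0 where "z0 \<in> spectrum CB" "sr = norm z0"
    unfolding sr_def by auto
  hence sr1: "sr < 1" and sr0: "0 \<le> sr" using CB_eig[OF R] unfolding spectrum_def by auto
  define r where "r = (1 + sr) / 2"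
  have r: "0 < r" "r < 1" "sr < r" unfolding r_def using sr1 sr0 by auto
  have rr: "complex_of_real r * complex_of_real (1 / r) = 1"
    unfolding of_real_mult[symmetric] using r by simp
  define C where "C = complex_of_real (1 / r) \<cdot>\<^sub>m CB"
  have Cc: "C \<in> carrier_mat n n" unfolding C_def using CBc by auto
  have srC: "spectral_radius C < 1"
  proof -
    from spectral_radius_mem_max(1)[OF Cc n] obtain z where z: "z \<in> spectrum C" "spectral_radius C = norm z" by auto
    from z(1) obtain v where ev: "eigenvector C v z" unfolding spectrum_def eigenvalue_def by auto
    hence v: "v \<in> carrier_vec n" "v \<noteq> 0\<^sub>v n" "C *\<^sub>v v = z \<cdot>\<^sub>v v" unfolding eigenvector_def using Cc by auto
    have "C *\<^sub>v v = complex_of_real (1 / r) \<cdot>\<^sub>v (CB *\<^sub>v v)" unfolding C_def by (rule smult_mat_mult_vec'[OF CBc v(1)])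
    hence "CB *\<^sub>v v = (complex_of_real r * z) \<cdot>\<^sub>v v"
    proof -
      assume h: "C *\<^sub>v v = complex_of_real (1 / r) \<cdot>\<^sub>v (CB *\<^sub>v v)"
      show ?thesis
      proof (rule eq_vecI)
        fix i assume "i < dim_vec ((complex_of_real r * z) \<cdot>\<^sub>v v)"
        hence i: "i < n" using v by simp
        have "complex_of_real (1 / r) * (CB *\<^sub>v v) $ i = z * v $ i"
          using arg_cong[OF h[symmetric, unfolded v(3)], of "\<lambda>x. x $ i"] i CBc v by simp
        hence a: "complex_of_real r * (complex_of_real (1 / r) * (CB *\<^sub>v v) $ i) = complex_of_real r * (z * v $ i)" by simp
        have "(CB *\<^sub>v v) $ i = complex_of_real r * (complex_of_real (1 / r) * (CB *\<^sub>v v) $ i)"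
          using r by (simp add: mult.assoc[symmetric] rr)
        also have "\<dots> = complex_of_real r * z * v $ i" using a by (simp add: mult.assoc)
        finally have "(CB *\<^sub>v v) $ i = complex_of_real r * z * v $ i" .
        thus "(CB *\<^sub>v v) $ i = ((complex_of_real r * z) \<cdot>\<^sub>v v) $ i" using i v by simp
      qed (use CBc v in auto)
    qed
    hence "eigenvalue CB (complex_of_real r * z)" unfolding eigenvalue_def eigenvector_def using v CBc by auto
    hence "norm (complex_of_real r * z) \<le> sr" unfolding sr_def
      by (intro spectral_radius_mem_max(2)[OF CBc n]) (auto simp: spectrum_def)
    hence "r * norm z \<le> sr" using r by (simp add: norm_mult)
    hence "r * norm z < r * 1" using r by linarith
    hence "norm z < 1" using r by (simp only: mult_less_cancel_left_pos)
    thus ?thesis using z by simp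
  qed
  from spectral_radius_jnf_norm_bound_less_1[OF Cc srC jnf_exists_c[OF Cc]]
  obtain c where c: "\<And>k. norm_bound (C ^\<^sub>m k) c" by auto
  have c0: "0 \<le> c"
  proof -
    have "norm ((C ^\<^sub>m 0) $$ (0,0)) \<le> c" using c[of 0] n Cc unfolding norm_bound_def
      by (metis pow_mat_dim_square(1) pow_mat_dim_square(2))
    thus ?thesis by (meson norm_ge_zero order_trans)
  qed
  have CBr: "CB = complex_of_real r \<cdot>\<^sub>m C"
  proof (rule eq_matI)
    fix i j assume "i < dim_row (complex_of_real r \<cdot>\<^sub>m C)" "j < dim_col (complex_of_real r \<cdot>\<^sub>m C)"
    hence ij: "i < n" "j < n" using Cc by auto
    have "complex_of_real r * (complex_of_real (1 / r) * CB $$ (i,j)) = CB $$ (i,j)"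
      using r by (simp add: mult.assoc[symmetric] rr)
    thus "CB $$ (i, j) = (complex_of_real r \<cdot>\<^sub>m C) $$ (i, j)" unfolding C_def using ij CBc r by simp
  qed (use Cc CBc in auto)
  have bound: "\<bar>(Bm ^\<^sub>m k) $$ (i,j)\<bar> \<le> c * r ^ k" if ij: "i < n" "j < n" for k i j
  proof -
    have "complex_of_real ((Bm ^\<^sub>m k) $$ (i,j)) = (CB ^\<^sub>m k) $$ (i,j)"
      using of_real_hom.mat_hom_pow[OF Bm_c, of k] ij Bm_c
      by (metis index_map_mat(1) pow_mat_dim_square(1) pow_mat_dim_square(2))
    also have "\<dots> = (complex_of_real r ^ k \<cdot>\<^sub>m C ^\<^sub>m k) $$ (i,j)" unfolding CBr smult_pow_mat[OF Cc] ..
    also have "\<dots> = complex_of_real r ^ k * (C ^\<^sub>m k) $$ (i,j)" using ij Cc by simp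
    finally have "\<bar>(Bm ^\<^sub>m k) $$ (i,j)\<bar> = r ^ k * norm ((C ^\<^sub>m k) $$ (i,j))"
      using r by (metis norm_mult norm_of_real norm_power abs_of_pos)
    also have "\<dots> \<le> r ^ k * c" using c[of k] ij Cc r unfolding norm_bound_def
      by (intro mult_left_mono) auto
    finally show ?thesis by (simp add: mult.commute)
  qed
  show ?thesis using c0 r bound by blast
qed

lemma Rz_EP: assumes R: Rz shows "eventually_positive n W"
proof -
  from decay[OF R] obtain c r where c: "0 \<le> c" and r: "0 < r" "r < 1"
    and b: "\<And>k i j. i < n \<Longrightarrow> j < n \<Longrightarrow> \<bar>(Bm ^\<^sub>m k) $$ (i,j)\<bar> \<le> c * r ^ k" by blast
  have e: "0 < 1 / (real n * (c + 1))" using n c by simp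
  from real_arch_pow_inv[OF e r(2)] obtain K where K: "r ^ K < 1 / (real n * (c + 1))" by auto
  show ?thesis unfolding eventually_positive_def
  proof (intro exI[of _ "max K 1"] allI impI)
    fix t i j assume t: "max K 1 \<le> t" and i: "i < n" and j: "j < n"
    have "c * r ^ t \<le> c * r ^ K" using t r c by (intro mult_left_mono power_decreasing) auto
    also have "\<dots> \<le> (c + 1) * r ^ K" using r by (simp add: distrib_right)
    also have "\<dots> < (c + 1) * (1 / (real n * (c + 1)))" using K c by (intro mult_strict_left_mono) auto
    also have "\<dots> = 1 / real n" using c by simp
    finally have lt: "c * r ^ t < 1 / real n" .
    have "(W ^\<^sub>m t) $$ (i,j) = (Bm ^\<^sub>m t) $$ (i,j) + 1 / real n" using Bpow[of t i j] t i j by simp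
    moreover have "- ((Bm ^\<^sub>m t) $$ (i,j)) \<le> c * r ^ t" using b[OF i j, of t] by simp
    ultimately show "0 < (W ^\<^sub>m t) $$ (i,j)" using lt by linarith
  qed
qed

lemma EP_Rz: assumes EP: "eventually_positive n W" shows Rz
  unfolding Rz_def
proof (intro allI impI)
  fix z v assume v: "v \<in> carrier_vec n" and v0: "v \<noteq> 0\<^sub>v n" and Av: "CW *\<^sub>v v = z \<cdot>\<^sub>v v"
    and s: "(\<Sum>i<n. v $ i) = 0"
  from EP obtain t0 where pos: "\<And>t i j. t \<ge> t0 \<Longrightarrow> i < n \<Longrightarrow> j < n \<Longrightarrow> (W ^\<^sub>m t) $$ (i,j) > 0"
    unfolding eventually_positive_def by blast
  define t where "t = Suc t0"
  define P where "P = W ^\<^sub>m t"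
  have Pc: "P \<in> carrier_mat n n" unfolding P_def using Wc by simp
  have Ppos: "\<And>i j. i < n \<Longrightarrow> j < n \<Longrightarrow> P $$ (i,j) > 0" unfolding P_def using pos[of t] unfolding t_def by (simp del: pow_mat.simps)
  have Prs: "\<And>i. i < n \<Longrightarrow> (\<Sum>j<n. P $$ (i,j)) = 1" unfolding P_def by (rule Wpow_rsum)
  have ev: "eigenvector CW v z" unfolding eigenvector_def using v v0 Av CWc by auto
  have Pv: "cmat P *\<^sub>v v = z ^ t \<cdot>\<^sub>v v"
    unfolding P_def of_real_hom.mat_hom_pow[OF Wc] by (rule eigenvector_pow[OF CWc ev])
  define m where "m = Max ((\<lambda>j. cmod (v $ j)) ` {..<n})"
  have fin: "finite ((\<lambda>j. cmod (v $ j)) ` {..<n})" by simp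
  have ne: "(\<lambda>j. cmod (v $ j)) ` {..<n} \<noteq> {}" using n by auto
  from Max_in[OF fin ne] obtain i0 where i0: "i0 < n" "cmod (v $ i0) = m" unfolding m_def by auto
  have mge: "\<And>j. j < n \<Longrightarrow> cmod (v $ j) \<le> m" unfolding m_def using fin by (intro Max_ge) auto
  have m0: "m > 0"
  proof -
    from v0 v obtain j where j: "j < n" "v $ j \<noteq> 0" by (metis eq_vecI carrier_vecD index_zero_vec)
    hence "cmod (v $ j) > 0" by simp
    with mge[OF j(1)] show ?thesis by linarith
  qed
  define d where "d = Min ((\<lambda>j. P $$ (i0,j)) ` {..<n})"
  have finP: "finite ((\<lambda>j. P $$ (i0,j)) ` {..<n})" by simp
  have neP: "(\<lambda>j. P $$ (i0,j)) ` {..<n} \<noteq> {}" using n by auto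
  from Min_in[OF finP neP] obtain j0 where "j0 < n" "P $$ (i0,j0) = d" unfolding d_def by auto
  hence d0: "d > 0" using Ppos[OF i0(1)] by auto
  have dle: "\<And>j. j < n \<Longrightarrow> d \<le> P $$ (i0,j)" unfolding d_def using finP by (intro Min_le) auto
  have cPc: "cmat P \<in> carrier_mat n n" using Pc by simp
  have "(cmat P *\<^sub>v v) $ i0 = (\<Sum>j<n. cmat P $$ (i0,j) * v $ j)" by (rule mv_index[OF cPc v i0(1)])
  also have "\<dots> = (\<Sum>j<n. complex_of_real (P $$ (i0,j)) * v $ j)" using Pc i0 by (intro sum.cong) auto
  also have "\<dots> = (\<Sum>j<n. complex_of_real (P $$ (i0,j) - d) * v $ j) + complex_of_real d * (\<Sum>j<n. v $ j)"
    by (simp add: algebra_simps sum.distrib sum_distrib_left of_real_diff sum_subtractf)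
  also have "\<dots> = (\<Sum>j<n. complex_of_real (P $$ (i0,j) - d) * v $ j)" using s by simp
  finally have eq: "z ^ t * v $ i0 = (\<Sum>j<n. complex_of_real (P $$ (i0,j) - d) * v $ j)"
    using Pv i0 v by simp
  have "cmod (z ^ t * v $ i0) \<le> (\<Sum>j<n. cmod (complex_of_real (P $$ (i0,j) - d) * v $ j))"
    unfolding eq by (rule norm_sum)
  also have "\<dots> = (\<Sum>j<n. (P $$ (i0,j) - d) * cmod (v $ j))"
    using dle by (intro sum.cong) (auto simp: norm_mult simp del: of_real_diff)
  also have "\<dots> \<le> (\<Sum>j<n. (P $$ (i0,j) - d) * m)"
    using dle mge by (intro sum_mono mult_left_mono) auto
  also have "\<dots> = (1 - real n * d) * m" using Prs[OF i0(1)]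
    by (simp add: sum_distrib_right[symmetric] sum_subtractf)
  also have "\<dots> < m" using d0 m0 n by (simp add: algebra_simps)
  finally have "cmod z ^ t * m < 1 * m" using i0 by (simp add: norm_mult norm_power)
  hence lt: "cmod z ^ t < 1" using m0 by (simp only: mult_less_cancel_right_pos)
  show "cmod z < 1"
  proof (rule ccontr)
    assume "\<not> cmod z < 1"
    hence "1 \<le> cmod z ^ t" by (intro one_le_power) auto
    with lt show False by simp
  qed
qed

end

lemma sp_sum: "(u :: 'a :: comm_semiring_0 vec) \<in> carrier_vec n \<Longrightarrow> w \<in> carrier_vec n \<Longrightarrow> u \<bullet> w = (\<Sum>i<n. u $ i * w $ i)"
  by (simp add: scalar_prod_def lessThan_atLeast0)

lemma T1: assumes A: "A \<in> carrier_mat n n" and x: "x \<in> carrier_vec n" and y: "y \<in> carrier_vec n"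
  shows "x \<bullet> (transpose_mat A *\<^sub>v y) = (A *\<^sub>v x) \<bullet> (y :: 'a :: comm_semiring_0 vec)"
proof -
  have At: "transpose_mat A \<in> carrier_mat n n" using A by simp
  have "x \<bullet> (transpose_mat A *\<^sub>v y) = (\<Sum>i<n. x $ i * (\<Sum>j<n. transpose_mat A $$ (i,j) * y $ j))"
    using sp_sum[OF x mult_mat_vec_carrier[OF At y]] mv_index[OF At y] by simp
  also have "\<dots> = (\<Sum>i<n. \<Sum>j<n. x $ i * (A $$ (j,i) * y $ j))"
    using A by (intro sum.cong refl) (auto simp: sum_distrib_left)
  also have "\<dots> = (\<Sum>j<n. \<Sum>i<n. x $ i * (A $$ (j,i) * y $ j))" by (rule sum.swap)
  also have "\<dots> = (\<Sum>j<n. (\<Sum>i<n. A $$ (j,i) * x $ i) * y $ j)"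
    by (intro sum.cong refl) (simp add: sum_distrib_left sum_distrib_right algebra_simps)
  also have "\<dots> = (A *\<^sub>v x) \<bullet> y"
    using sp_sum[OF mult_mat_vec_carrier[OF A x] y] mv_index[OF A x] by simp
  finally show ?thesis .
qed

lemma cs_sum: fixes u w :: "nat \<Rightarrow> real"
  shows "(\<Sum>i<n. u i * w i)\<^sup>2 \<le> (\<Sum>i<n. u i * u i) * (\<Sum>i<n. w i * w i)"
proof -
  define A where "A = (\<lambda>i j. (u i * u i) * (w j * w j))"
  define B where "B = (\<lambda>i j. (u j * u j) * (w i * w i))"
  define C where "C = (\<lambda>i j. (u i * w i) * (u j * w j))"
  have tm: "(u i * w j - u j * w i)\<^sup>2 = A i j + B i j - 2 * C i j" for i j
    unfolding A_def B_def C_def by (simp add: power2_eq_square algebra_simps)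
  have "0 \<le> (\<Sum>i<n. \<Sum>j<n. (u i * w j - u j * w i)\<^sup>2)" by (intro sum_nonneg) auto
  also have "\<dots> = (\<Sum>i<n. \<Sum>j<n. A i j + B i j - 2 * C i j)" unfolding tm ..
  also have "\<dots> = (\<Sum>i<n. \<Sum>j<n. A i j) + (\<Sum>i<n. \<Sum>j<n. B i j) - 2 * (\<Sum>i<n. \<Sum>j<n. C i j)"
    by (simp only: sum.distrib sum_subtractf sum_distrib_left)
  also have "(\<Sum>i<n. \<Sum>j<n. A i j) = (\<Sum>i<n. u i * u i) * (\<Sum>i<n. w i * w i)"
    unfolding A_def by (rule sum_product[symmetric])
  also have "(\<Sum>i<n. \<Sum>j<n. B i j) = (\<Sum>i<n. u i * u i) * (\<Sum>i<n. w i * w i)"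
    unfolding B_def by (subst sum.swap) (rule sum_product[symmetric])
  also have "(\<Sum>i<n. \<Sum>j<n. C i j) = (\<Sum>i<n. u i * w i)\<^sup>2"
    unfolding C_def power2_eq_square by (rule sum_product[symmetric])
  finally show ?thesis by simp
qed

lemma cs_vec: assumes "(u :: real vec) \<in> carrier_vec n" "w \<in> carrier_vec n"
  shows "(u \<bullet> w)\<^sup>2 \<le> (u \<bullet> u) * (w \<bullet> w)"
  using cs_sum[of "\<lambda>i. u $ i" "\<lambda>i. w $ i" n] sp_sum[OF assms(1,2)] sp_sum[OF assms(1,1)] sp_sum[OF assms(2,2)]
  by simp

lemma sq_nonneg: "(u :: real vec) \<in> carrier_vec n \<Longrightarrow> 0 \<le> u \<bullet> u"
  by (simp add: sp_sum sum_nonneg)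

lemma sq_zero: assumes u: "(u :: real vec) \<in> carrier_vec n" and z: "u \<bullet> u = 0" shows "u = 0\<^sub>v n"
proof (rule eq_vecI)
  fix i assume "i < dim_vec (0\<^sub>v n :: real vec)"
  hence i: "i < n" by simp
  have "(\<Sum>j<n. u $ j * u $ j) = 0" using z sp_sum[OF u u] by simp
  hence "\<forall>j\<in>{..<n}. u $ j * u $ j = 0" by (subst sum_nonneg_eq_0_iff[symmetric]) auto
  thus "u $ i = 0\<^sub>v n $ i" using i by auto
qed (use u in auto)

lemma quad_zero: fixes a K :: real
  assumes all: "\<And>t. 0 \<le> 2 * t * a + t\<^sup>2 * K" and K: "0 \<le> K" and a: "0 \<le> a"
  shows "a = 0"
proof -
  define t where "t = - a / (K + 1)"
  have K1: "K + 1 > 0" using K by simp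
  have "0 \<le> 2 * t * a + t\<^sup>2 * K" by (rule all)
  hence "0 \<le> (2 * t * a + t\<^sup>2 * K) * (K + 1)\<^sup>2" using K1 by simp
  also have "(2 * t * a + t\<^sup>2 * K) * (K + 1)\<^sup>2 = 2 * a * (t * (K + 1)) * (K + 1) + (t * (K + 1))\<^sup>2 * K"
    by (simp add: power2_eq_square algebra_simps)
  also have "t * (K + 1) = - a" unfolding t_def using K1 by simp
  also have "2 * a * (- a) * (K + 1) + (- a)\<^sup>2 * K = - a\<^sup>2 * (K + 2)"
    by (simp add: power2_eq_square algebra_simps)
  finally have "a\<^sup>2 * (K + 2) \<le> 0" by simp
  hence "a\<^sup>2 \<le> 0" using K by (simp add: mult_le_0_iff)
  thus ?thesis by simp
qed

lemma psd_zero: assumes M: "(M :: real mat) \<in> carrier_mat n n" and sym: "transpose_mat M = M"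
  and psd: "\<And>x. x \<in> carrier_vec n \<Longrightarrow> 0 \<le> x \<bullet> (M *\<^sub>v x)"
  and x: "x \<in> carrier_vec n" and z: "x \<bullet> (M *\<^sub>v x) = 0"
  shows "M *\<^sub>v x = 0\<^sub>v n"
proof -
  define w where "w = M *\<^sub>v x"
  have w: "w \<in> carrier_vec n" unfolding w_def using M x by simp
  have Mw: "M *\<^sub>v w \<in> carrier_vec n" using M w by simp
  have symm: "x \<bullet> (M *\<^sub>v w) = w \<bullet> w"
  proof -
    have "x \<bullet> (M *\<^sub>v w) = x \<bullet> (transpose_mat M *\<^sub>v w)" using sym by simp
    also have "\<dots> = (M *\<^sub>v x) \<bullet> w" by (rule T1[OF M x w])
    finally show ?thesis unfolding w_def .
  qed
  have "0 \<le> 2 * t * (w \<bullet> w) + t\<^sup>2 * (w \<bullet> (M *\<^sub>v w))" for t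
  proof -
    have xt: "x + t \<cdot>\<^sub>v w \<in> carrier_vec n" using x w by simp
    have "M *\<^sub>v (x + t \<cdot>\<^sub>v w) = w + t \<cdot>\<^sub>v (M *\<^sub>v w)"
      unfolding w_def using M x w by (simp add: mult_add_distrib_mat_vec[OF M x] mult_mat_vec[OF M w] w_def[symmetric])
    hence "(x + t \<cdot>\<^sub>v w) \<bullet> (M *\<^sub>v (x + t \<cdot>\<^sub>v w)) = x \<bullet> w + t * (x \<bullet> (M *\<^sub>v w)) + t * (w \<bullet> w) + t * t * (w \<bullet> (M *\<^sub>v w))"
      using x w Mw
      by (simp add: add_scalar_prod_distrib[of _ n] scalar_prod_add_distrib[of _ n] algebra_simps)
    also have "x \<bullet> w = 0" using z unfolding w_def .
    finally have "(x + t \<cdot>\<^sub>v w) \<bullet> (M *\<^sub>v (x + t \<cdot>\<^sub>v w)) = 2 * t * (w \<bullet> w) + t\<^sup>2 * (w \<bullet> (M *\<^sub>v w))"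
      unfolding symm by (simp add: power2_eq_square algebra_simps)
    with psd[OF xt] show ?thesis by simp
  qed
  from quad_zero[OF this psd[OF w] sq_nonneg[OF w]] have "w \<bullet> w = 0" .
  from sq_zero[OF w this] show ?thesis unfolding w_def .
qed

context ds
begin

abbreviation "onesr \<equiv> (ones_vec n :: real vec)"
abbreviation "Wt \<equiv> transpose_mat W"
definition "M3 = 1\<^sub>m n - Wt * W"

lemma Wtc: "Wt \<in> carrier_mat n n" using Wc by simp
lemma M3c: "M3 \<in> carrier_mat n n" unfolding M3_def
  by (rule minus_carrier_mat[OF mult_carrier_mat[OF Wtc Wc]])

lemma M3_vec: "x \<in> carrier_vec n \<Longrightarrow> M3 *\<^sub>v x = x - Wt *\<^sub>v (W *\<^sub>v x)"
  unfolding M3_def using Wc Wtc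
  by (simp add: minus_mult_distrib_mat_vec[OF one_carrier_mat mult_carrier_mat[OF Wtc Wc]])

lemma Q_eq: assumes x: "x \<in> carrier_vec n" shows "x \<bullet> (M3 *\<^sub>v x) = x \<bullet> x - (W *\<^sub>v x) \<bullet> (W *\<^sub>v x)"
proof -
  have Wx: "W *\<^sub>v x \<in> carrier_vec n" using Wc x by simp
  have "x \<bullet> (M3 *\<^sub>v x) = x \<bullet> x - x \<bullet> (Wt *\<^sub>v (W *\<^sub>v x))"
    unfolding M3_vec[OF x] using x Wtc Wx by (simp add: scalar_prod_minus_distrib[of _ n])
  also have "x \<bullet> (Wt *\<^sub>v (W *\<^sub>v x)) = (W *\<^sub>v x) \<bullet> (W *\<^sub>v x)" by (rule T1[OF Wc x Wx])
  finally show ?thesis .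
qed

lemma M3_sym: "transpose_mat M3 = M3"
  unfolding M3_def using Wc Wtc
  by (intro eq_matI) (auto simp: comm_scalar_prod[of _ n])

lemma W_sum_r: "x \<in> carrier_vec n \<Longrightarrow> (\<Sum>i<n. (W *\<^sub>v x) $ i) = (\<Sum>i<n. (x :: real vec) $ i)"
proof -
  assume x: "x \<in> carrier_vec n"
  have "(\<Sum>i<n. (W *\<^sub>v x) $ i) = (\<Sum>i<n. \<Sum>j<n. W $$ (i,j) * x $ j)" using mv_index[OF Wc x] by simp
  also have "\<dots> = (\<Sum>j<n. \<Sum>i<n. W $$ (i,j) * x $ j)" by (rule sum.swap)
  also have "\<dots> = (\<Sum>j<n. (\<Sum>i<n. W $$ (i,j)) * x $ j)" by (simp add: sum_distrib_right)
  also have "\<dots> = (\<Sum>j<n. x $ j)" using csum by simp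
  finally show ?thesis .
qed

lemma sq_shift: assumes u: "(u :: real vec) \<in> carrier_vec n"
  shows "(u + c \<cdot>\<^sub>v onesr) \<bullet> (u + c \<cdot>\<^sub>v onesr) = u \<bullet> u + 2 * c * (\<Sum>i<n. u $ i) + c\<^sup>2 * real n"
proof -
  have "(u + c \<cdot>\<^sub>v onesr) \<bullet> (u + c \<cdot>\<^sub>v onesr) = (\<Sum>i<n. (u $ i + c) * (u $ i + c))"
    using sp_sum[of "u + c \<cdot>\<^sub>v onesr" n "u + c \<cdot>\<^sub>v onesr"] u by simp
  also have "\<dots> = (\<Sum>i<n. u $ i * u $ i) + 2 * c * (\<Sum>i<n. u $ i) + c\<^sup>2 * real n"
    by (simp add: algebra_simps sum.distrib sum_distrib_left power2_eq_square)
  finally show ?thesis using sp_sum[OF u u] by simp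
qed

lemma onesr_ker: "M3 *\<^sub>v onesr = 0\<^sub>v n"
  unfolding M3_vec[OF ones_vec_carrier] rs cs by (intro eq_vecI) auto

lemma Q_dec: assumes x: "x \<in> carrier_vec n"
  defines "c \<equiv> (\<Sum>i<n. x $ i) / real n"
  defines "y \<equiv> x - c \<cdot>\<^sub>v onesr"
  shows "y \<in> carrier_vec n" "(\<Sum>i<n. y $ i) = 0" "x = y + c \<cdot>\<^sub>v onesr"
    "x \<bullet> (M3 *\<^sub>v x) = y \<bullet> y - (W *\<^sub>v y) \<bullet> (W *\<^sub>v y)"
proof -
  show y: "y \<in> carrier_vec n" unfolding y_def using x by simp
  show sy: "(\<Sum>i<n. y $ i) = 0" unfolding y_def c_def using x n by (simp add: sum_subtractf)
  show xy: "x = y + c \<cdot>\<^sub>v onesr" unfolding y_def using x by (intro eq_vecI) auto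
  have Wy: "W *\<^sub>v y \<in> carrier_vec n" using Wc y by simp
  have "W *\<^sub>v x = W *\<^sub>v y + c \<cdot>\<^sub>v onesr" unfolding xy
    using Wc y by (simp add: mult_add_distrib_mat_vec[OF Wc y] mult_mat_vec[OF Wc] rs)
  hence "(W *\<^sub>v x) \<bullet> (W *\<^sub>v x) = (W *\<^sub>v y) \<bullet> (W *\<^sub>v y) + c\<^sup>2 * real n"
    using sq_shift[OF Wy, of c] W_sum_r[OF y] sy by simp
  moreover have "x \<bullet> x = y \<bullet> y + c\<^sup>2 * real n" using sq_shift[OF y, of c] sy xy by simp
  ultimately show "x \<bullet> (M3 *\<^sub>v x) = y \<bullet> y - (W *\<^sub>v y) \<bullet> (W *\<^sub>v y)" using Q_eq[OF x] by simp
qed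

end


context ds
begin

lemma onesr_ne0: "onesr \<noteq> 0\<^sub>v n"
proof
  assume "onesr = 0\<^sub>v n"
  hence "onesr $ 0 = 0\<^sub>v n $ 0" by simp
  thus False using n by simp
qed

lemma onesr_ker': "onesr \<in> mat_kernel M3" by (rule mat_kernelI[OF M3c ones_vec_carrier onesr_ker])

lemma strict_iii: assumes psd: "psd_mat n M3" and kd: "kernel_dim M3 = 1"
  and a: "a \<in> carrier_vec n" and sa: "(\<Sum>i<n. a $ i) = 0" and a0: "a \<noteq> 0\<^sub>v n"
  shows "(W *\<^sub>v a) \<bullet> (W *\<^sub>v a) < a \<bullet> a"
proof -
  have ge: "0 \<le> a \<bullet> (M3 *\<^sub>v a)" using psd a unfolding psd_mat_def by auto
  have "a \<bullet> (M3 *\<^sub>v a) \<noteq> 0"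
  proof
    assume z: "a \<bullet> (M3 *\<^sub>v a) = 0"
    have "M3 *\<^sub>v a = 0\<^sub>v n"
      by (rule psd_zero[OF M3c M3_sym _ a z]) (use psd in \<open>auto simp: psd_mat_def\<close>)
    hence ak: "a \<in> mat_kernel M3" by (rule mat_kernelI[OF M3c a])
    interpret K: kernel n n M3 by (unfold_locales, rule M3c)
    have "\<exists>c. a = c \<cdot>\<^sub>v onesr"
    proof (rule ccontr)
      assume "\<not> (\<exists>c. a = c \<cdot>\<^sub>v onesr)"
      hence "K.dim \<ge> 2" using K.dim_ge2[OF onesr_ker' ak onesr_ne0] by blast
      thus False using kd kdim[OF M3c] by simp
    qed
    then obtain c where ac: "a = c \<cdot>\<^sub>v onesr" by auto
    hence "c * real n = 0" using sa by (simp add: mult.commute)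
    hence "c = 0" using n by simp
    with ac a0 show False by auto
  qed
  with ge Q_eq[OF a] show ?thesis by simp
qed

lemma LC: assumes nor: "W * Wt = Wt * W" and u: "u \<in> carrier_vec n"
  shows "((W *\<^sub>v u) \<bullet> (W *\<^sub>v u))\<^sup>2 \<le> (u \<bullet> u) * ((W *\<^sub>v (W *\<^sub>v u)) \<bullet> (W *\<^sub>v (W *\<^sub>v u)))"
proof -
  define z where "z = W *\<^sub>v u"
  have z: "z \<in> carrier_vec n" unfolding z_def using Wc u by simp
  define w where "w = Wt *\<^sub>v z"
  have w: "w \<in> carrier_vec n" unfolding w_def using Wtc z by simp
  have e1: "z \<bullet> z = u \<bullet> w" unfolding w_def z_def by (rule T1[OF Wc u z[unfolded z_def], symmetric])
  have "w \<bullet> w = z \<bullet> (W *\<^sub>v w)"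
    using T1[OF Wtc z w] unfolding w_def by simp
  also have "W *\<^sub>v w = (W * Wt) *\<^sub>v z" unfolding w_def using Wc Wtc z by simp
  also have "\<dots> = Wt *\<^sub>v (W *\<^sub>v z)" unfolding nor using Wc Wtc z by simp
  also have "z \<bullet> (Wt *\<^sub>v (W *\<^sub>v z)) = (W *\<^sub>v z) \<bullet> (W *\<^sub>v z)"
    by (rule T1[OF Wc z]) (use Wc z in simp)
  finally have e2: "w \<bullet> w = (W *\<^sub>v z) \<bullet> (W *\<^sub>v z)" .
  from cs_vec[OF u w] e1 e2 show ?thesis unfolding z_def by simp
qed

lemma Wpow_Suc_vec: "y \<in> carrier_vec n \<Longrightarrow> W ^\<^sub>m Suc k *\<^sub>v y = W *\<^sub>v (W ^\<^sub>m k *\<^sub>v y)"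
  unfolding pow_mat_Suc_left[OF Wc] by (rule assoc_mult_mat_vec[OF Wc Wpow_c])

lemma Wpow_B: assumes y: "y \<in> carrier_vec n" and sy: "(\<Sum>j<n. y $ j) = 0" and i: "i < n"
  shows "(W ^\<^sub>m k *\<^sub>v y) $ i = (\<Sum>j<n. (Bm ^\<^sub>m k) $$ (i,j) * y $ j)"
proof (cases "k = 0")
  case True
  thus ?thesis using mv_index[OF Wpow_c y i, of k] Wc Bm_c by simp
next
  case False
  hence k: "k \<ge> 1" by simp
  have "(W ^\<^sub>m k *\<^sub>v y) $ i = (\<Sum>j<n. (W ^\<^sub>m k) $$ (i,j) * y $ j)" by (rule mv_index[OF Wpow_c y i])
  also have "\<dots> = (\<Sum>j<n. ((Bm ^\<^sub>m k) $$ (i,j) + 1 / real n) * y $ j)"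
    using Bpow[OF k i] by (intro sum.cong) auto
  also have "\<dots> = (\<Sum>j<n. (Bm ^\<^sub>m k) $$ (i,j) * y $ j) + (1 / real n) * (\<Sum>j<n. y $ j)"
    by (simp add: algebra_simps sum.distrib sum_distrib_left)
  finally show ?thesis using sy by simp
qed

lemma strict_normal: assumes R: Rz and nor: "W * Wt = Wt * W"
  and y: "y \<in> carrier_vec n" and sy: "(\<Sum>i<n. y $ i) = 0" and y0: "y \<noteq> 0\<^sub>v n"
  shows "(W *\<^sub>v y) \<bullet> (W *\<^sub>v y) < y \<bullet> y"
proof (rule ccontr)
  assume "\<not> ?thesis"
  hence ge: "y \<bullet> y \<le> (W *\<^sub>v y) \<bullet> (W *\<^sub>v y)" by simp
  define a where "a = (\<lambda>k. (W ^\<^sub>m k *\<^sub>v y) \<bullet> (W ^\<^sub>m k *\<^sub>v y))"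
  have vc: "\<And>k. W ^\<^sub>m k *\<^sub>v y \<in> carrier_vec n" by (rule mult_mat_vec_carrier[OF Wpow_c y])
  have a0: "a 0 = y \<bullet> y" unfolding a_def using y Wc by simp
  have a1: "a 1 = (W *\<^sub>v y) \<bullet> (W *\<^sub>v y)" unfolding a_def using Wc by simp
  have apos: "a 0 > 0" unfolding a0 using sq_nonneg[OF y] sq_zero[OF y] y0 by force
  have anonneg: "\<And>k. 0 \<le> a k" unfolding a_def using sq_nonneg[OF vc] by simp
  have lc: "(a (Suc k))\<^sup>2 \<le> a k * a (Suc (Suc k))" for k
    unfolding a_def Wpow_Suc_vec[OF y] using LC[OF nor vc[of k]] by simp
  have mono: "a 0 \<le> a k \<and> a k \<le> a (Suc k)" for k
  proof (induct k)
    case 0 thus ?case using ge a0 a1 by simp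
  next
    case (Suc k)
    hence h1: "a 0 \<le> a (Suc k)" and h2: "a k \<le> a (Suc k)" by auto
    have p: "a (Suc k) > 0" using h1 apos by simp
    have "a (Suc k) * a (Suc k) \<le> a k * a (Suc (Suc k))" using lc[of k] by (simp add: power2_eq_square)
    also have "\<dots> \<le> a (Suc k) * a (Suc (Suc k))" using h2 anonneg by (intro mult_right_mono) auto
    finally have "a (Suc k) \<le> a (Suc (Suc k))" using p by (simp add: mult_le_cancel_left_pos)
    with h1 show ?case by simp
  qed
  from decay[OF R] obtain c r where c: "0 \<le> c" and r: "0 < r" "r < 1"
    and b: "\<And>k i j. i < n \<Longrightarrow> j < n \<Longrightarrow> \<bar>(Bm ^\<^sub>m k) $$ (i,j)\<bar> \<le> c * r ^ k" by blast
  define S where "S = (\<Sum>j<n. \<bar>y $ j\<bar>)"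
  have S0: "0 \<le> S" unfolding S_def by (intro sum_nonneg) auto
  have entry: "\<bar>(W ^\<^sub>m k *\<^sub>v y) $ i\<bar> \<le> c * r ^ k * S" if i: "i < n" for k i
  proof -
    have "\<bar>(W ^\<^sub>m k *\<^sub>v y) $ i\<bar> = \<bar>\<Sum>j<n. (Bm ^\<^sub>m k) $$ (i,j) * y $ j\<bar>" using Wpow_B[OF y sy i] by simp
    also have "\<dots> \<le> (\<Sum>j<n. \<bar>(Bm ^\<^sub>m k) $$ (i,j)\<bar> * \<bar>y $ j\<bar>)"
      by (rule order_trans[OF sum_abs]) (simp add: abs_mult)
    also have "\<dots> \<le> (\<Sum>j<n. c * r ^ k * \<bar>y $ j\<bar>)"
      using b[OF i] by (intro sum_mono mult_right_mono) auto
    also have "\<dots> = c * r ^ k * S" unfolding S_def by (simp add: sum_distrib_left)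
    finally show ?thesis .
  qed
  define D where "D = real n * (c * S)\<^sup>2"
  have D0: "0 \<le> D" unfolding D_def by simp
  have abound: "a k \<le> D * (r\<^sup>2) ^ k" for k
  proof -
    have "a k = (\<Sum>i<n. (W ^\<^sub>m k *\<^sub>v y) $ i * (W ^\<^sub>m k *\<^sub>v y) $ i)" unfolding a_def using sp_sum[OF vc vc] by simp
    also have "\<dots> \<le> (\<Sum>i<n. (c * r ^ k * S)\<^sup>2)"
    proof (intro sum_mono)
      fix i assume "i \<in> {..<n}"
      hence i: "i < n" by simp
      have "(W ^\<^sub>m k *\<^sub>v y) $ i * (W ^\<^sub>m k *\<^sub>v y) $ i = \<bar>(W ^\<^sub>m k *\<^sub>v y) $ i\<bar>\<^sup>2" by (simp add: power2_eq_square)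
      also have "\<dots> \<le> (c * r ^ k * S)\<^sup>2" using entry[OF i] by (intro power_mono) auto
      finally show "(W ^\<^sub>m k *\<^sub>v y) $ i * (W ^\<^sub>m k *\<^sub>v y) $ i \<le> (c * r ^ k * S)\<^sup>2" .
    qed
    also have "\<dots> = D * (r\<^sup>2) ^ k" unfolding D_def by (simp add: power_mult_distrib power_mult[symmetric] mult.commute)
    finally show ?thesis .
  qed
  have e: "0 < a 0 / (D + 1)" using apos D0 by simp
  have r2: "r\<^sup>2 < 1" using r by (simp add: power_less_one_iff) 
  from real_arch_pow_inv[OF e r2] obtain K where K: "(r\<^sup>2) ^ K < a 0 / (D + 1)" by auto
  have "a K \<le> D * (r\<^sup>2) ^ K" by (rule abound)
  also have "\<dots> \<le> (D + 1) * (r\<^sup>2) ^ K" by (simp add: distrib_right)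
  also have "\<dots> < (D + 1) * (a 0 / (D + 1))" using K D0 by (intro mult_strict_left_mono) auto
  also have "\<dots> = a 0" using D0 by simp
  finally have "a K < a 0" .
  with mono[of K] show False by simp
qed

end


context ds
begin

lemma iii_of_normal: assumes R: Rz and nor: "W * Wt = Wt * W"
  shows "psd_mat n M3" "kernel_dim M3 = 1"
proof -
  have key: "x \<bullet> (M3 *\<^sub>v x) \<ge> 0 \<and> (x \<bullet> (M3 *\<^sub>v x) = 0 \<longrightarrow> (\<exists>c. x = c \<cdot>\<^sub>v onesr))"
    if x: "x \<in> carrier_vec n" for x
  proof -
    define c where "c = (\<Sum>i<n. x $ i) / real n"
    define y where "y = x - c \<cdot>\<^sub>v onesr"
    note d = Q_dec[OF x, folded c_def, folded y_def]
    show ?thesis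
    proof (cases "y = 0\<^sub>v n")
      case True
      hence "x = c \<cdot>\<^sub>v onesr" using d(3) by simp
      thus ?thesis using d(4) True Wc by (auto simp: mult_zero_vec')
    next
      case False
      from strict_normal[OF R nor d(1) d(2) False] d(4) show ?thesis by simp
    qed
  qed
  show "psd_mat n M3" unfolding psd_mat_def using key by blast
  interpret K: kernel n n M3 by (unfold_locales, rule M3c)
  have "K.dim \<ge> 1" by (rule K.dim_ge1[OF onesr_ker' onesr_ne0])
  moreover have "K.dim \<le> 1"
  proof (rule K.dim_le1[OF onesr_ker'])
    fix w assume w: "w \<in> mat_kernel M3"
    have wc: "w \<in> carrier_vec n" using mat_kernelD(1)[OF M3c w] .
    have "M3 *\<^sub>v w = 0\<^sub>v n" using mat_kernelD(2)[OF M3c w] .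
    hence "w \<bullet> (M3 *\<^sub>v w) = 0" using wc by simp
    thus "\<exists>c. w = c \<cdot>\<^sub>v onesr" using key[OF wc] by blast
  qed
  ultimately show "kernel_dim M3 = 1" using kdim[OF M3c] by simp
qed

lemma Rz_of_iii: assumes psd: "psd_mat n M3" and kd: "kernel_dim M3 = 1"
  shows Rz
  unfolding Rz_def
proof (intro allI impI)
  fix z v assume v: "v \<in> carrier_vec n" and v0: "v \<noteq> 0\<^sub>v n" and Av: "CW *\<^sub>v v = z \<cdot>\<^sub>v v"
    and s: "(\<Sum>i<n. v $ i) = 0"
  define a where "a = vec n (\<lambda>i. Re (v $ i))"
  define b where "b = vec n (\<lambda>i. Im (v $ i))"
  have ac: "a \<in> carrier_vec n" and bc: "b \<in> carrier_vec n" unfolding a_def b_def by auto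
  have sa: "(\<Sum>i<n. a $ i) = 0" unfolding a_def using arg_cong[OF s, of Re] by (simp add: Re_sum)
  have sb: "(\<Sum>i<n. b $ i) = 0" unfolding b_def using arg_cong[OF s, of Im] by (simp add: Im_sum)
  have CWv: "(CW *\<^sub>v v) $ i = (\<Sum>j<n. complex_of_real (W $$ (i,j)) * v $ j)" if i: "i < n" for i
    using mv_index[OF CWc v i] A_index i by simp
  have Wa: "(W *\<^sub>v a) $ i = Re (z * v $ i)" if i: "i < n" for i
  proof -
    have "(W *\<^sub>v a) $ i = (\<Sum>j<n. W $$ (i,j) * Re (v $ j))" using mv_index[OF Wc ac i] unfolding a_def by simp
    also have "\<dots> = Re ((CW *\<^sub>v v) $ i)" unfolding CWv[OF i] by (simp add: Re_sum)
    finally show ?thesis using Av i v by simp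
  qed
  have Wb: "(W *\<^sub>v b) $ i = Im (z * v $ i)" if i: "i < n" for i
  proof -
    have "(W *\<^sub>v b) $ i = (\<Sum>j<n. W $$ (i,j) * Im (v $ j))" using mv_index[OF Wc bc i] unfolding b_def by simp
    also have "\<dots> = Im ((CW *\<^sub>v v) $ i)" unfolding CWv[OF i] by (simp add: Im_sum)
    finally show ?thesis using Av i v by simp
  qed
  have Wac: "W *\<^sub>v a \<in> carrier_vec n" "W *\<^sub>v b \<in> carrier_vec n" using Wc ac bc by auto
  have cm: "(cmod x)\<^sup>2 = Re x * Re x + Im x * Im x" for x unfolding cmod_power2 by (simp add: power2_eq_square)
  have T: "a \<bullet> a + b \<bullet> b = (\<Sum>i<n. (cmod (v $ i))\<^sup>2)"
    unfolding sp_sum[OF ac ac] sp_sum[OF bc bc] sum.distrib[symmetric]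
    by (intro sum.cong) (auto simp: a_def b_def cm)
  have WT: "(W *\<^sub>v a) \<bullet> (W *\<^sub>v a) + (W *\<^sub>v b) \<bullet> (W *\<^sub>v b) = (cmod z)\<^sup>2 * (a \<bullet> a + b \<bullet> b)"
  proof -
    have "(W *\<^sub>v a) \<bullet> (W *\<^sub>v a) + (W *\<^sub>v b) \<bullet> (W *\<^sub>v b) = (\<Sum>i<n. (cmod (z * v $ i))\<^sup>2)"
      unfolding sp_sum[OF Wac(1) Wac(1)] sp_sum[OF Wac(2) Wac(2)] sum.distrib[symmetric]
      by (intro sum.cong) (auto simp: Wa Wb cm)
    also have "\<dots> = (cmod z)\<^sup>2 * (\<Sum>i<n. (cmod (v $ i))\<^sup>2)"
      by (simp add: norm_mult power_mult_distrib sum_distrib_left)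
    finally show ?thesis unfolding T .
  qed
  have le: "(W *\<^sub>v x) \<bullet> (W *\<^sub>v x) \<le> x \<bullet> x" if x: "x \<in> carrier_vec n" for x
    using psd x Q_eq[OF x] unfolding psd_mat_def by fastforce
  have "a \<noteq> 0\<^sub>v n \<or> b \<noteq> 0\<^sub>v n"
  proof (rule ccontr)
    assume "\<not> ?thesis"
    hence "a = 0\<^sub>v n" "b = 0\<^sub>v n" by auto
    hence ab: "a = 0\<^sub>v n" "b = 0\<^sub>v n" by auto
    have "v = 0\<^sub>v n"
    proof (rule eq_vecI)
      fix i assume "i < dim_vec (0\<^sub>v n :: complex vec)"
      hence i: "i < n" by simp
      have "a $ i = 0" "b $ i = 0" using ab i by auto
      hence "Re (v $ i) = 0" "Im (v $ i) = 0" using i unfolding a_def b_def by auto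
      thus "v $ i = 0\<^sub>v n $ i" using i by (simp add: complex_eq_iff)
    qed (use v in auto)
    with v0 show False by simp
  qed
  hence lt: "(W *\<^sub>v a) \<bullet> (W *\<^sub>v a) + (W *\<^sub>v b) \<bullet> (W *\<^sub>v b) < a \<bullet> a + b \<bullet> b"
    using strict_iii[OF psd kd ac sa] strict_iii[OF psd kd bc sb] le[OF ac] le[OF bc] by fastforce
  have "0 \<le> (W *\<^sub>v a) \<bullet> (W *\<^sub>v a) + (W *\<^sub>v b) \<bullet> (W *\<^sub>v b)" using sq_nonneg[OF Wac(1)] sq_nonneg[OF Wac(2)] by simp
  hence Tpos: "0 < a \<bullet> a + b \<bullet> b" using lt by simp
  from lt WT have "(cmod z)\<^sup>2 * (a \<bullet> a + b \<bullet> b) < 1 * (a \<bullet> a + b \<bullet> b)" by simp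
  hence "(cmod z)\<^sup>2 < 1" using Tpos by (simp only: mult_less_cancel_right_pos)
  thus "cmod z < 1" by (simp add: power_less_one_iff abs_less_iff)
qed

end

theorem corollary3:
  fixes W :: "real mat" and n :: nat
  assumes "n > 0"
    and "W \<in> carrier_mat n n"
    and "W *\<^sub>v ones_vec n = ones_vec n"
    and "transpose_mat W *\<^sub>v ones_vec n = ones_vec n"
  shows "(eventually_doubly_stochastic n W \<longleftrightarrow>
            marginally_schur_stable n W \<and> one_simple_strictly_dominant W)
       \<and> (W * transpose_mat W = transpose_mat W * W \<longrightarrow>
            (eventually_doubly_stochastic n W \<longleftrightarrow>
               psd_mat n (1\<^sub>m n - transpose_mat W * W) \<and>
               kernel_dim (1\<^sub>m n - transpose_mat W * W) = 1))"
proof -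
  interpret ds n W by (unfold_locales) (use assms in auto)
  have EDS: "eventually_doubly_stochastic n W \<longleftrightarrow> eventually_positive n W"
    unfolding eventually_doubly_stochastic_def eventually_stochastic_def using assms by auto
  have E: "eventually_positive n W \<longleftrightarrow> Rz" using EP_Rz Rz_EP by blast
  have ii: "Rz \<longleftrightarrow> marginally_schur_stable n W \<and> one_simple_strictly_dominant W"
    using Rz_mss Rz_osd osd_Rz by blast
  show ?thesis
  proof (intro conjI impI)
    show "eventually_doubly_stochastic n W \<longleftrightarrow> marginally_schur_stable n W \<and> one_simple_strictly_dominant W"
      using EDS E ii by blast
  next
    assume nor: "W * transpose_mat W = transpose_mat W * W"
    have "Rz \<longleftrightarrow> psd_mat n M3 \<and> kernel_dim M3 = 1"
      using iii_of_normal[OF _ nor] Rz_of_iii by blast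
    thus "eventually_doubly_stochastic n W \<longleftrightarrow>
               psd_mat n (1\<^sub>m n - transpose_mat W * W) \<and>
               kernel_dim (1\<^sub>m n - transpose_mat W * W) = 1"
      using EDS E unfolding M3_def by blast
  qed
qed

end
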